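(* Let $\omega$ be a rectilinearly-convex obstacle and let $S^*$ be a minimum skeleton for $\omega$. Then $|S^*|=1$ if and only if $\omega$ has a diagonal.
   Context: An obstacle $\omega$ is a simple polygon in $\mathbb{R}^2$ (a closed, bounded polygonal region without holes whose boundary does not intersect itself), assumed in general position (no three of its vertices are collinear); vertices and edges of $\omega$ are those of its boundary. $\omega$ is rectilinear if each edge is horizontal or vertical, and a rectilinear obstacle is rectilinearly-convex if any two points of $\omega$ can be joined by a shortest rectilinear path (made of horizontal and vertical segments, of minimum $\ell_1$ length) contained in $\omega$. A corner point of a rectilinear path is a point where a horizontal and a vertical segment of the path meet. A set $S$ of closed line segments is inside $\omega$ if the union of its elements is contained in $\omega$. Such an $S$ is a skeleton for $\omega$ if for every pair of points $p,q$ not in the interior of $\omega$ such that every shortest rectilinear path between $p$ and $q$ with at most one corner point meets the interior of $\omega$, each such path intersects some element of $S$; a minimum skeleton is one with the fewest segments, and $|S|$ is the number of segments. $B(\omega)$ is the smallest closed axis-parallel rectangle containing $\omega$; the extreme edges are the edges of $\omega$ lying on the boundary of $B(\omega)$ (exactly four for a rectilinearly-convex obstacle); an extreme corner is a vertex of $\omega$ that is a common endpoint of two extreme edges (equivalently, a corner of $B(\omega)$ belonging to $\omega$). Two extreme corners are opposite if they are diagonally opposite corners of $B(\omega)$. A diagonal of $\omega$ is a line segment contained in $\omega$ joining a pair of opposite extreme corners. *)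

theory Defs
  imports "HOL-Analysis.Analysis"
begin

type_synonym pt = "real \<times> real"

definition pvert :: "pt list \<Rightarrow> nat \<Rightarrow> pt" where
  "pvert vs i = vs ! (i mod length vs)"

definition pedge :: "pt list \<Rightarrow> nat \<Rightarrow> pt set" where
  "pedge vs i = closed_segment (pvert vs i) (pvert vs (Suc i))"

definition simple_polygon :: "pt list \<Rightarrow> bool" where
  "simple_polygon vs \<longleftrightarrow> length vs \<ge> 3 \<and> distinct vs \<and>
     (\<forall>i < length vs. \<forall>j < length vs. i \<noteq> j \<longrightarrow>
        (if j = Suc i mod length vs then pedge vs i \<inter> pedge vs j = {pvert vs j}
         else if i = Suc j mod length vs then pedge vs i \<inter> pedge vs j = {pvert vs i}
         else pedge vs i \<inter> pedge vs j = {}))"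

definition polygon_boundary :: "pt list \<Rightarrow> pt set" where
  "polygon_boundary vs = (\<Union>i < length vs. pedge vs i)"

definition polygon_region :: "pt list \<Rightarrow> pt set" where
  "polygon_region vs = polygon_boundary vs \<union> inside (polygon_boundary vs)"

definition general_position :: "pt list \<Rightarrow> bool" where
  "general_position vs \<longleftrightarrow>
     (\<forall>a\<in>set vs. \<forall>b\<in>set vs. \<forall>c\<in>set vs.
        a \<noteq> b \<and> b \<noteq> c \<and> a \<noteq> c \<longrightarrow> \<not> collinear {a, b, c})"

definition axis_parallel :: "pt \<Rightarrow> pt \<Rightarrow> bool" where
  "axis_parallel a b \<longleftrightarrow> fst a = fst b \<or> snd a = snd b"

definition rectilinear_vertices :: "pt list \<Rightarrow> bool" where
  "rectilinear_vertices vs \<longleftrightarrow>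
     (\<forall>i < length vs. axis_parallel (pvert vs i) (pvert vs (Suc i)))"

definition rectilinear_obstacle :: "pt set \<Rightarrow> bool" where
  "rectilinear_obstacle \<omega> \<longleftrightarrow>
     (\<exists>vs. simple_polygon vs \<and> general_position vs \<and> rectilinear_vertices vs
           \<and> \<omega> = polygon_region vs)"

definition rect_path :: "pt list \<Rightarrow> bool" where
  "rect_path ps \<longleftrightarrow> ps \<noteq> [] \<and>
     (\<forall>i < length ps - 1. ps ! i \<noteq> ps ! Suc i \<and> axis_parallel (ps ! i) (ps ! Suc i))"

definition path_set :: "pt list \<Rightarrow> pt set" where
  "path_set ps = set ps \<union> (\<Union>i < length ps - 1. closed_segment (ps ! i) (ps ! Suc i))"

definition l1_dist :: "pt \<Rightarrow> pt \<Rightarrow> real" where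
  "l1_dist a b = \<bar>fst a - fst b\<bar> + \<bar>snd a - snd b\<bar>"

definition path_len :: "pt list \<Rightarrow> real" where
  "path_len ps = (\<Sum>i < length ps - 1. l1_dist (ps ! i) (ps ! Suc i))"

definition horizontal :: "pt \<Rightarrow> pt \<Rightarrow> bool" where
  "horizontal a b \<longleftrightarrow> snd a = snd b"

definition corner_points :: "pt list \<Rightarrow> pt set" where
  "corner_points ps = {ps ! i | i. 0 < i \<and> i < length ps - 1 \<and>
      horizontal (ps ! (i - 1)) (ps ! i) \<noteq> horizontal (ps ! i) (ps ! Suc i)}"

definition rect_path_between :: "pt \<Rightarrow> pt \<Rightarrow> pt list \<Rightarrow> bool" where
  "rect_path_between p q ps \<longleftrightarrow> rect_path ps \<and> hd ps = p \<and> last ps = q"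

definition shortest_rect_path :: "pt \<Rightarrow> pt \<Rightarrow> pt list \<Rightarrow> bool" where
  "shortest_rect_path p q ps \<longleftrightarrow> rect_path_between p q ps \<and>
     (\<forall>ps'. rect_path_between p q ps' \<longrightarrow> path_len ps \<le> path_len ps')"

definition rect_convex :: "pt set \<Rightarrow> bool" where
  "rect_convex \<omega> \<longleftrightarrow>
     (\<forall>p\<in>\<omega>. \<forall>q\<in>\<omega>. \<exists>ps. shortest_rect_path p q ps \<and> path_set ps \<subseteq> \<omega>)"

definition rect_convex_obstacle :: "pt set \<Rightarrow> bool" where
  "rect_convex_obstacle \<omega> \<longleftrightarrow> rectilinear_obstacle \<omega> \<and> rect_convex \<omega>"

definition is_segment :: "pt set \<Rightarrow> bool" where
  "is_segment s \<longleftrightarrow> (\<exists>a b. a \<noteq> b \<and> s = closed_segment a b)"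

definition short_L_path :: "pt \<Rightarrow> pt \<Rightarrow> pt list \<Rightarrow> bool" where
  "short_L_path p q ps \<longleftrightarrow> shortest_rect_path p q ps \<and> card (corner_points ps) \<le> 1"

definition skeleton :: "pt set \<Rightarrow> pt set set \<Rightarrow> bool" where
  "skeleton \<omega> S \<longleftrightarrow> finite S \<and> (\<forall>s\<in>S. is_segment s) \<and> \<Union>S \<subseteq> \<omega> \<and>
     (\<forall>p q. p \<notin> interior \<omega> \<and> q \<notin> interior \<omega> \<and>
        (\<forall>ps. short_L_path p q ps \<longrightarrow> path_set ps \<inter> interior \<omega> \<noteq> {}) \<longrightarrow>
        (\<forall>ps. short_L_path p q ps \<longrightarrow> (\<exists>s\<in>S. path_set ps \<inter> s \<noteq> {})))"

definition minimum_skeleton :: "pt set \<Rightarrow> pt set set \<Rightarrow> bool" where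
  "minimum_skeleton \<omega> S \<longleftrightarrow> skeleton \<omega> S \<and> (\<forall>S'. skeleton \<omega> S' \<longrightarrow> card S \<le> card S')"

definition xmin :: "pt set \<Rightarrow> real" where "xmin \<omega> = Inf (fst ` \<omega>)"
definition xmax :: "pt set \<Rightarrow> real" where "xmax \<omega> = Sup (fst ` \<omega>)"
definition ymin :: "pt set \<Rightarrow> real" where "ymin \<omega> = Inf (snd ` \<omega>)"
definition ymax :: "pt set \<Rightarrow> real" where "ymax \<omega> = Sup (snd ` \<omega>)"

definition opposite_extreme_corners :: "pt set \<Rightarrow> pt \<Rightarrow> pt \<Rightarrow> bool" where
  "opposite_extreme_corners \<omega> c d \<longleftrightarrow> c \<in> \<omega> \<and> d \<in> \<omega> \<and>
     ({c, d} = {(xmin \<omega>, ymin \<omega>), (xmax \<omega>, ymax \<omega>)} \<or>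
      {c, d} = {(xmin \<omega>, ymax \<omega>), (xmax \<omega>, ymin \<omega>)})"

definition has_diagonal :: "pt set \<Rightarrow> bool" where
  "has_diagonal \<omega> \<longleftrightarrow> (\<exists>c d. opposite_extreme_corners \<omega> c d \<and> closed_segment c d \<subseteq> \<omega>)"

end

theory Submission
  imports Defs
begin

definition bt :: "real \<Rightarrow> real \<Rightarrow> real \<Rightarrow> bool" where
  "bt u v w \<longleftrightarrow> min u w \<le> v \<and> v \<le> max u w"

definition bt2 :: "pt \<Rightarrow> pt \<Rightarrow> pt \<Rightarrow> bool" where
  "bt2 a x q \<longleftrightarrow> bt (fst a) (fst x) (fst q) \<and> bt (snd a) (snd x) (snd q)"

lemma seg_param:
  fixes a q :: pt
  assumes "0 \<le> u" "u \<le> 1" "fst x = (1 - u) * fst a + u * fst q" "snd x = (1 - u) * snd a + u * snd q"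
  shows "x \<in> closed_segment a q"
proof -
  have "x = (1 - u) *\<^sub>R a + u *\<^sub>R q" using assms(3,4) by (simp add: prod_eq_iff)
  then show ?thesis using assms(1,2) unfolding closed_segment_def by blast
qed

lemma real_param:
  fixes s v w :: real
  assumes "bt s v w"
  shows "\<exists>u. 0 \<le> u \<and> u \<le> 1 \<and> v = (1 - u) * s + u * w"
proof (cases "s = w")
  case True then show ?thesis using assms by (auto simp: bt_def intro!: exI[of _ 0])
next
  case False
  define u where "u = (v - s) / (w - s)"
  have h: "u * (w - s) = v - s" using False by (simp add: u_def)
  have "(1 - u) * s + u * w = s + u * (w - s)" by (simp add: algebra_simps)
  then have "v = (1 - u) * s + u * w" using h by linarith
  moreover have "0 \<le> u \<and> u \<le> 1" using assms False
    by (cases "s < w") (auto simp: u_def bt_def divide_simps)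
  ultimately show ?thesis by blast
qed

lemma seg_mem:
  assumes "bt2 a x q" "fst a = fst q \<or> snd a = snd q"
  shows "x \<in> closed_segment a q"
  using assms(2)
proof
  assume h: "fst a = fst q"
  obtain u where u: "0 \<le> u" "u \<le> 1" "snd x = (1 - u) * snd a + u * snd q"
    using real_param assms(1) bt2_def by blast
  have "fst x = (1 - u) * fst a + u * fst q" using h assms(1) by (simp add: bt2_def bt_def algebra_simps)
  then show ?thesis using seg_param u by blast
next
  assume h: "snd a = snd q"
  obtain u where u: "0 \<le> u" "u \<le> 1" "fst x = (1 - u) * fst a + u * fst q"
    using real_param assms(1) bt2_def by blast
  have "snd x = (1 - u) * snd a + u * snd q" using h assms(1) by (simp add: bt2_def bt_def algebra_simps)
  then show ?thesis using seg_param u by blast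
qed

lemma seg_bt2: "x \<in> closed_segment a q \<Longrightarrow> bt2 a x q"
proof -
  assume "x \<in> closed_segment a q"
  then obtain u where u: "0 \<le> u" "u \<le> 1" "x = (1 - u) *\<^sub>R a + u *\<^sub>R q"
    unfolding closed_segment_def by blast
  have "bt s ((1 - u) * s + u * w) w" for s w :: real
  proof -
    have "(1 - u) * s + u * w = s + u * (w - s)" by (simp add: algebra_simps)
    moreover have "min s w \<le> s + u * (w - s) \<and> s + u * (w - s) \<le> max s w"
    proof (cases "s \<le> w")
      case True
      have "u * (w - s) \<le> 1 * (w - s)" using u True by (intro mult_right_mono) auto
      moreover have "0 \<le> u * (w - s)" using u True by simp
      ultimately show ?thesis using True by auto
    next
      case False
      have "u * (s - w) \<le> 1 * (s - w)" using u False by (intro mult_right_mono) auto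
      moreover have "0 \<le> u * (s - w)" using u False by simp
      ultimately show ?thesis using False by (auto simp: algebra_simps)
    qed
    ultimately show ?thesis by (simp add: bt_def)
  qed
  then show "bt2 a x q" using u(3) by (simp add: bt2_def)
qed

lemma l1_tri: "l1_dist a c \<le> l1_dist a b + l1_dist b c"
  by (simp add: l1_dist_def)

lemma l1_eq_bt2: "l1_dist a b + l1_dist b c = l1_dist a c \<Longrightarrow> bt2 a b c"
  by (auto simp: l1_dist_def bt2_def bt_def)

lemma bt2_trans: "bt2 b x q \<Longrightarrow> bt2 a b q \<Longrightarrow> bt2 a x q"
  by (auto simp: bt2_def bt_def)

lemma bt2_l1: "bt2 a b q \<Longrightarrow> l1_dist a b + l1_dist b q = l1_dist a q"
  unfolding l1_dist_def bt2_def bt_def min_def max_def by (auto split: if_splits)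

lemma bt2_back: "bt2 b a q \<Longrightarrow> bt2 a b q \<Longrightarrow> a = b"
  by (auto simp: bt2_def bt_def prod_eq_iff)

lemma path_len_Cons2: "path_len (a # b # rest) = l1_dist a b + path_len (b # rest)"
  unfolding path_len_def by (simp add: sum.lessThan_Suc_shift del: sum.lessThan_Suc)

lemma path_len_single: "path_len [a] = 0"
  by (simp add: path_len_def)

lemma path_set_Cons2: "path_set (a # b # rest) = closed_segment a b \<union> path_set (b # rest)"
proof -
  have "(\<Union>i<length (a # b # rest) - 1. closed_segment ((a # b # rest) ! i) ((a # b # rest) ! Suc i))
     = closed_segment a b \<union> (\<Union>i<length (b # rest) - 1. closed_segment ((b # rest) ! i) ((b # rest) ! Suc i))"
    by (simp add: lessThan_Suc_eq_insert_0)
  then show ?thesis unfolding path_set_def by auto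
qed

lemma path_set_single: "path_set [a] = {a}"
  by (simp add: path_set_def)

lemma rect_path_Cons2: "rect_path (a # b # rest) \<longleftrightarrow> a \<noteq> b \<and> axis_parallel a b \<and> rect_path (b # rest)"
  unfolding rect_path_def by (auto simp: less_Suc_eq_0_disj)

lemma rect_path_single: "rect_path [a]"
  by (simp add: rect_path_def)

lemma corner_Cons3: "corner_points (a # b # c # rest) =
   (if horizontal a b \<noteq> horizontal b c then {b} else {}) \<union> corner_points (b # c # rest)"
proof -
  let ?xs = "a # b # c # rest" and ?ys = "b # c # rest"
  show ?thesis
  proof (rule set_eqI)
    fix x
    show "x \<in> corner_points ?xs \<longleftrightarrow> x \<in> (if horizontal a b \<noteq> horizontal b c then {b} else {}) \<union> corner_points ?ys"
    proof
      assume "x \<in> corner_points ?xs"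
      then obtain i where i: "x = ?xs ! i" "0 < i" "i < length ?xs - 1"
        "horizontal (?xs ! (i - 1)) (?xs ! i) \<noteq> horizontal (?xs ! i) (?xs ! Suc i)"
        unfolding corner_points_def by blast
      show "x \<in> (if horizontal a b \<noteq> horizontal b c then {b} else {}) \<union> corner_points ?ys"
      proof (cases "i = 1")
        case True then show ?thesis using i by simp
      next
        case False
        then obtain j where j: "i = Suc j" "0 < j" using i(2) by (cases i) auto
        have "x = ?ys ! j" "j < length ?ys - 1"
          "horizontal (?ys ! (j - 1)) (?ys ! j) \<noteq> horizontal (?ys ! j) (?ys ! Suc j)"
          using i j by (auto simp: nth_Cons')
        then have "x \<in> corner_points ?ys" unfolding corner_points_def using j(2) by blast
        then show ?thesis by blast
      qed
    next
      assume "x \<in> (if horizontal a b \<noteq> horizontal b c then {b} else {}) \<union> corner_points ?ys"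
      then show "x \<in> corner_points ?xs"
      proof
        assume "x \<in> (if horizontal a b \<noteq> horizontal b c then {b} else {})"
        then have "x = ?xs ! 1 \<and> 0 < (1::nat) \<and> 1 < length ?xs - 1 \<and>
           horizontal (?xs ! (1 - 1)) (?xs ! 1) \<noteq> horizontal (?xs ! 1) (?xs ! Suc 1)"
          by (auto split: if_splits)
        then show ?thesis unfolding corner_points_def by blast
      next
        assume "x \<in> corner_points ?ys"
        then obtain j where j: "x = ?ys ! j" "0 < j" "j < length ?ys - 1"
          "horizontal (?ys ! (j - 1)) (?ys ! j) \<noteq> horizontal (?ys ! j) (?ys ! Suc j)"
          unfolding corner_points_def by blast
        have "x = ?xs ! Suc j \<and> 0 < Suc j \<and> Suc j < length ?xs - 1 \<and>
           horizontal (?xs ! (Suc j - 1)) (?xs ! Suc j) \<noteq> horizontal (?xs ! Suc j) (?xs ! Suc (Suc j))"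
          using j by (cases j) auto
        then show ?thesis unfolding corner_points_def by blast
      qed
    qed
  qed
qed

lemma corner_short: "length xs \<le> 2 \<Longrightarrow> corner_points xs = {}"
  unfolding corner_points_def by auto

definition Lsh :: "pt \<Rightarrow> pt \<Rightarrow> pt \<Rightarrow> pt set" where
  "Lsh p r q = closed_segment p r \<union> closed_segment r q"

definition sp :: "pt list \<Rightarrow> bool" where
  "sp ps \<longleftrightarrow> rect_path ps \<and> path_len ps = l1_dist (hd ps) (last ps)"

lemma len_ge: "rect_path ps \<Longrightarrow> l1_dist (hd ps) (last ps) \<le> path_len ps"
proof (induction ps rule: induct_list012)
  case 1 then show ?case by (simp add: rect_path_def)
next
  case (2 x) then show ?case by (simp add: path_len_single l1_dist_def)
next
  case (3 x y zs)
  have "rect_path (y # zs)" using "3.prems" rect_path_Cons2 by blast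
  then have "l1_dist y (last (y # zs)) \<le> path_len (y # zs)" using "3.IH"(2) by simp
  then show ?case using l1_tri[of x "last (y # zs)" y] by (simp add: path_len_Cons2)
qed

lemma sp_Cons2:
  assumes "sp (a # b # rest)"
  shows "sp (b # rest) \<and> bt2 a b (last (b # rest)) \<and> a \<noteq> b \<and> axis_parallel a b"
proof -
  let ?q = "last (b # rest)"
  have rp: "rect_path (b # rest)" "a \<noteq> b" "axis_parallel a b"
    using assms rect_path_Cons2 sp_def by blast+
  have e: "l1_dist a b + path_len (b # rest) = l1_dist a ?q"
    using assms by (simp add: sp_def path_len_Cons2)
  have g: "l1_dist b ?q \<le> path_len (b # rest)" using len_ge[OF rp(1)] by simp
  have "l1_dist a ?q \<le> l1_dist a b + l1_dist b ?q" by (rule l1_tri)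
  then have "path_len (b # rest) = l1_dist b ?q" "l1_dist a b + l1_dist b ?q = l1_dist a ?q"
    using e g by linarith+
  then show ?thesis using rp l1_eq_bt2 by (auto simp: sp_def)
qed

lemma bt2_refl: "bt2 a a q"
  by (simp add: bt2_def bt_def)

lemma sp_M1: "sp ps \<Longrightarrow> x \<in> set ps \<Longrightarrow> bt2 (hd ps) x (last ps)"
proof (induction ps arbitrary: x rule: induct_list012)
  case 1 then show ?case by simp
next
  case (2 y) then show ?case using bt2_refl by simp
next
  case (3 a b zs)
  have s: "sp (b # zs)" "bt2 a b (last (b # zs))" using sp_Cons2[OF "3.prems"(1)] by auto
  have hq: "hd (a#b#zs) = a" "last (a#b#zs) = last (b#zs)" by simp_all
  show ?case
  proof (cases "x = a")
    case True then show ?thesis unfolding hq using bt2_refl by simp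
  next
    case False
    then have xs: "x \<in> set (b # zs)" using "3.prems"(2) by simp
    have "bt2 (hd (b # zs)) x (last (b # zs))" by (rule "3.IH"(2)[OF s(1) xs])
    then have "bt2 b x (last (b # zs))" by simp
    then have "bt2 a x (last (b # zs))" by (rule bt2_trans[OF _ s(2)])
    then show ?thesis unfolding hq .
  qed
qed

lemma sp_M2: "sp ps \<Longrightarrow> 0 < i \<Longrightarrow> i < length ps \<Longrightarrow> ps ! i \<noteq> hd ps"
proof (induction ps arbitrary: i rule: induct_list012)
  case 1 then show ?case by simp
next
  case (2 y) then show ?case by simp
next
  case (3 a b zs)
  have s: "sp (b # zs)" "bt2 a b (last (b # zs))" "a \<noteq> b" using sp_Cons2[OF "3.prems"(1)] by auto
  show ?case
  proof
    assume eq: "(a # b # zs) ! i = hd (a # b # zs)"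
    obtain j where j: "i = Suc j" using "3.prems"(2) by (cases i) auto
    have x: "(b # zs) ! j = a" using eq j by simp
    have jl: "j < length (b # zs)" using "3.prems"(3) j by simp
    have "a \<in> set (b # zs)" using nth_mem[OF jl] x by simp
    then have "bt2 b a (last (b # zs))" using sp_M1[OF s(1)] by simp
    then show False using bt2_back[OF _ s(2)] s(3) by blast
  qed
qed

lemma hq_help:
  assumes "if horizontal b c then snd b = snd q else fst b = fst q"
    and "horizontal a b = horizontal b c" and "axis_parallel a b"
  shows "if horizontal a b then snd a = snd q else fst a = fst q"
proof (cases "horizontal a b")
  case True
  then have "horizontal b c" using assms(2) by simp
  then have "snd b = snd q" using assms(1) by simp
  moreover have "snd a = snd b" using True by (simp add: horizontal_def)
  ultimately show ?thesis using True by simp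
next
  case False
  then have "\<not> horizontal b c" using assms(2) by simp
  then have "fst b = fst q" using assms(1) by simp
  moreover have "fst a = fst b" using False assms(3) by (simp add: horizontal_def axis_parallel_def)
  ultimately show ?thesis using False by simp
qed

lemma straight:
  "sp ps \<Longrightarrow> length ps \<ge> 2 \<Longrightarrow> corner_points ps = {} \<Longrightarrow>
   path_set ps = closed_segment (hd ps) (last ps) \<and>
   (if horizontal (ps!0) (ps!1) then snd (hd ps) = snd (last ps) else fst (hd ps) = fst (last ps))"
proof (induction ps rule: induct_list012)
  case 1 then show ?case by simp
next
  case (2 y) then show ?case by simp
next
  case (3 a b zs)
  have s: "sp (b # zs)" "bt2 a b (last (b # zs))" "a \<noteq> b" "axis_parallel a b"
    using sp_Cons2[OF "3.prems"(1)] by auto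
  show ?case
  proof (cases zs)
    case Nil
    have ps: "path_set [a, b] = closed_segment a b"
      unfolding path_set_Cons2 path_set_single by auto
    show ?thesis using s(4) unfolding Nil ps
      by (auto simp: axis_parallel_def horizontal_def)
  next
    case (Cons c rest)
    have cp: "corner_points (a # b # c # rest) = (if horizontal a b \<noteq> horizontal b c then {b} else {}) \<union> corner_points (b # c # rest)"
      by (rule corner_Cons3)
    then have hh: "horizontal a b = horizontal b c" and c0: "corner_points (b # zs) = {}"
      using "3.prems"(3) Cons by (auto split: if_splits)
    have len: "length (b # zs) \<ge> 2" using Cons by simp
    have e: "(b#zs)!0 = b" "(b#zs)!1 = c" "hd (b#zs) = b" using Cons by simp_all
    have IH: "path_set (b # zs) = closed_segment b (last (b # zs)) \<and>
      (if horizontal b c then snd b = snd (last (b # zs)) else fst b = fst (last (b # zs)))"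
      using "3.IH"(2)[OF s(1) len c0] unfolding e .
    let ?q = "last (b # zs)"
    have hq: "if horizontal a b then snd a = snd ?q else fst a = fst ?q"
      by (rule hq_help[OF conjunct2[OF IH] hh s(4)])
    have al: "fst a = fst ?q \<or> snd a = snd ?q"
      using hq by (cases "horizontal a b") simp_all
    have "b \<in> closed_segment a ?q" using seg_mem[OF s(2) al] .
    then have u: "closed_segment a b \<union> closed_segment b ?q = closed_segment a ?q"
      by (rule Un_closed_segment)
    have "path_set (a # b # zs) = closed_segment a b \<union> path_set (b # zs)" by (rule path_set_Cons2)
    also have "... = closed_segment a b \<union> closed_segment b ?q" using conjunct1[OF IH] by (simp only:)
    also have "... = closed_segment a ?q" by (rule u)
    finally have "path_set (a # b # zs) = closed_segment a ?q" .
    have g: "(a#b#zs)!0 = a" "(a#b#zs)!1 = b" "hd (a#b#zs) = a" "last (a#b#zs) = ?q" by simp_all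
    show ?thesis unfolding g using \<open>path_set (a # b # zs) = closed_segment a ?q\<close> hq by (rule conjI)
  qed
qed

lemma shape:
  "sp ps \<Longrightarrow> length ps \<ge> 2 \<Longrightarrow> card (corner_points ps) \<le> 1 \<Longrightarrow>
   path_set ps = (if horizontal (ps!0) (ps!1) then Lsh (hd ps) (fst (last ps), snd (hd ps)) (last ps)
                  else Lsh (hd ps) (fst (hd ps), snd (last ps)) (last ps))"
proof (induction ps rule: induct_list012)
  case 1 then show ?case by simp
next
  case (2 y) then show ?case by simp
next
  case (3 a b zs)
  have s: "sp (b # zs)" "bt2 a b (last (b # zs))" "a \<noteq> b" "axis_parallel a b"
    using sp_Cons2[OF "3.prems"(1)] by auto
  let ?q = "last (b # zs)"
  have g: "(a#b#zs)!0 = a" "(a#b#zs)!1 = b" "hd (a#b#zs) = a" "last (a#b#zs) = ?q" by simp_all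
  show ?case
  proof (cases zs)
    case Nil
    have ps: "path_set [a, b] = closed_segment a b"
      unfolding path_set_Cons2 path_set_single by auto
    have lb: "Lsh a b b = closed_segment a b" unfolding Lsh_def by (simp add: insert_absorb)
    have "(if horizontal a b then Lsh a (fst b, snd a) b else Lsh a (fst a, snd b) b) = closed_segment a b"
    proof (cases "horizontal a b")
      case True
      then have "(fst b, snd a) = b" by (simp add: horizontal_def prod_eq_iff)
      then show ?thesis using True lb by simp
    next
      case False
      then have "(fst a, snd b) = b" using s(4) by (simp add: horizontal_def axis_parallel_def prod_eq_iff)
      then show ?thesis using False lb by simp
    qed
    then show ?thesis unfolding Nil ps by (cases "horizontal a b") simp_all
  next
    case (Cons c rest)
    have cp: "corner_points (a # b # c # rest) = (if horizontal a b \<noteq> horizontal b c then {b} else {}) \<union> corner_points (b # c # rest)"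
      by (rule corner_Cons3)
    have fin: "finite (corner_points (b # c # rest))"
    proof -
      have "corner_points (b # c # rest) \<subseteq> (\<lambda>i. (b # c # rest) ! i) ` {..<length (b # c # rest)}"
        unfolding corner_points_def by auto
      then show ?thesis using finite_surj by blast
    qed
    show ?thesis
    proof (cases "horizontal a b = horizontal b c")
      case hh: True
      have "card (corner_points (b # zs)) \<le> 1" using "3.prems"(3) cp hh Cons by simp
      moreover have len: "length (b # zs) \<ge> 2" using Cons by simp
      moreover have e: "(b#zs)!0 = b" "(b#zs)!1 = c" "hd (b#zs) = b" using Cons by simp_all
      ultimately have IH: "path_set (b # zs) = (if horizontal b c then Lsh b (fst ?q, snd b) ?q
                  else Lsh b (fst b, snd ?q) ?q)"
        using "3.IH"(2)[OF s(1) len] unfolding e by blast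
      show ?thesis
      proof (cases "horizontal a b")
        case True
        then have y: "snd a = snd b" by (simp add: horizontal_def)
        have "b \<in> closed_segment a (fst ?q, snd b)"
          using s(2) y by (intro seg_mem) (auto simp: bt2_def bt_def)
        then have u: "closed_segment a b \<union> closed_segment b (fst ?q, snd b) = closed_segment a (fst ?q, snd b)"
          by (rule Un_closed_segment)
        have IH': "path_set (b # zs) = Lsh b (fst ?q, snd b) ?q" using IH True hh by simp
        have "path_set (a # b # zs) = closed_segment a b \<union> path_set (b # zs)" by (rule path_set_Cons2)
        also have "... = (closed_segment a b \<union> closed_segment b (fst ?q, snd b)) \<union> closed_segment (fst ?q, snd b) ?q"
          unfolding IH' Lsh_def by blast
        also have "... = Lsh a (fst ?q, snd a) ?q" unfolding u Lsh_def y ..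
        finally show ?thesis unfolding g if_P[OF True] .
      next
        case False
        then have y: "fst a = fst b" using s(4) by (simp add: horizontal_def axis_parallel_def)
        have "b \<in> closed_segment a (fst b, snd ?q)"
          using s(2) y by (intro seg_mem) (auto simp: bt2_def bt_def)
        then have u: "closed_segment a b \<union> closed_segment b (fst b, snd ?q) = closed_segment a (fst b, snd ?q)"
          by (rule Un_closed_segment)
        have IH': "path_set (b # zs) = Lsh b (fst b, snd ?q) ?q" using IH False hh by simp
        have "path_set (a # b # zs) = closed_segment a b \<union> path_set (b # zs)" by (rule path_set_Cons2)
        also have "... = (closed_segment a b \<union> closed_segment b (fst b, snd ?q)) \<union> closed_segment (fst b, snd ?q) ?q"
          unfolding IH' Lsh_def by blast
        also have "... = Lsh a (fst a, snd ?q) ?q" unfolding u Lsh_def y ..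
        finally show ?thesis unfolding g if_not_P[OF False] .
      qed
    next
      case hh: False
      have "b \<in> corner_points (a # b # zs)" using cp hh Cons by simp
      moreover have fin2: "finite (corner_points (a # b # zs))" using cp fin Cons by simp
      ultimately have "corner_points (a # b # zs) = {b}"
        using "3.prems"(3) card_le_Suc0_iff_eq[OF fin2] by auto
      then have sub: "corner_points (b # zs) \<subseteq> {b}" using cp Cons by auto
      have "b \<notin> corner_points (b # zs)"
      proof
        assume "b \<in> corner_points (b # zs)"
        then obtain i where i: "b = (b # zs) ! i" "0 < i" "i < length (b # zs) - 1"
          unfolding corner_points_def by blast
        then show False using sp_M2[OF s(1) i(2)] by simp
      qed
      then have c0: "corner_points (b # zs) = {}" using sub by blast
      have len: "length (b # zs) \<ge> 2" using Cons by simp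
      have e: "(b#zs)!0 = b" "(b#zs)!1 = c" "hd (b#zs) = b" using Cons by simp_all
      have st: "path_set (b # zs) = closed_segment b ?q \<and>
        (if horizontal b c then snd b = snd ?q else fst b = fst ?q)"
        using straight[OF s(1) len c0] unfolding e .
      show ?thesis
      proof (cases "horizontal a b")
        case True
        then have bb: "b = (fst ?q, snd a)" using st hh by (auto simp: horizontal_def prod_eq_iff)
        have "path_set (a # b # zs) = closed_segment a b \<union> path_set (b # zs)" by (rule path_set_Cons2)
        also have "... = Lsh a b ?q" using conjunct1[OF st] unfolding Lsh_def by (simp only:)
        also have "... = Lsh a (fst ?q, snd a) ?q" using bb by (rule arg_cong[where f="\<lambda>x. Lsh a x ?q"])
        finally show ?thesis unfolding g if_P[OF True] .
      next
        case False
        then have bb: "b = (fst a, snd ?q)" using st hh s(4)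
          by (auto simp: horizontal_def axis_parallel_def prod_eq_iff)
        have "path_set (a # b # zs) = closed_segment a b \<union> path_set (b # zs)" by (rule path_set_Cons2)
        also have "... = Lsh a b ?q" using conjunct1[OF st] unfolding Lsh_def by (simp only:)
        also have "... = Lsh a (fst a, snd ?q) ?q" using bb by (rule arg_cong[where f="\<lambda>x. Lsh a x ?q"])
        finally show ?thesis unfolding g if_not_P[OF False] .
      qed
    qed
  qed
qed

definition Lsh0 :: "pt \<Rightarrow> pt \<Rightarrow> pt \<Rightarrow> pt set" where
  "Lsh0 p r q = closed_segment p r \<union> closed_segment r q"

definition hvc :: "pt set \<Rightarrow> bool" where
  "hvc W \<longleftrightarrow> (\<forall>u\<in>W. \<forall>v\<in>W. fst u = fst v \<or> snd u = snd v \<longrightarrow> closed_segment u v \<subseteq> W)"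

abbreviation D0 :: "pt set" where "D0 \<equiv> closed_segment (0,0) (1,1)"

lemma D0_iff: "v \<in> D0 \<longleftrightarrow> fst v = snd v \<and> 0 \<le> fst v \<and> fst v \<le> 1"
proof
  assume "v \<in> D0"
  then have "bt2 (0,0) v (1,1)" by (rule seg_bt2)
  moreover obtain u where "v = (1 - u) *\<^sub>R (0,0) + u *\<^sub>R ((1::real),(1::real))"
    using \<open>v \<in> D0\<close> unfolding closed_segment_def by blast
  ultimately show "fst v = snd v \<and> 0 \<le> fst v \<and> fst v \<le> 1" by (auto simp: bt2_def bt_def)
next
  assume "fst v = snd v \<and> 0 \<le> fst v \<and> fst v \<le> 1"
  then show "v \<in> D0" by (intro seg_param[of "fst v"]) auto
qed

lemma W_dr:
  assumes hv: "hvc W" and D: "D0 \<subseteq> W" and box: "\<And>w. w \<in> W \<Longrightarrow> 0 \<le> snd w \<and> snd w \<le> 1"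
    and u: "u \<in> W" and v: "0 \<le> fst v" "fst v \<le> snd v" "fst u \<le> fst v" "snd v \<le> snd u"
  shows "v \<in> W"
proof -
  have e: "(snd u, snd u) \<in> W" using D box[OF u] by (auto simp: D0_iff)
  have m: "(fst v, snd u) \<in> W"
  proof -
    have "(fst v, snd u) \<in> closed_segment u (snd u, snd u)"
      using v by (intro seg_mem) (auto simp: bt2_def bt_def)
    moreover have "closed_segment u (snd u, snd u) \<subseteq> W" using hv u e by (simp add: hvc_def)
    ultimately show ?thesis by blast
  qed
  have f: "(fst v, fst v) \<in> W" using D v box[OF u] by (auto simp: D0_iff)
  have "v \<in> closed_segment (fst v, fst v) (fst v, snd u)"
    using v by (intro seg_mem) (auto simp: bt2_def bt_def)
  moreover have "closed_segment (fst v, fst v) (fst v, snd u) \<subseteq> W" using hv m f by (simp add: hvc_def)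
  ultimately show ?thesis by blast
qed

lemma W_ul:
  assumes hv: "hvc W" and D: "D0 \<subseteq> W" and box: "\<And>w. w \<in> W \<Longrightarrow> 0 \<le> snd w \<and> snd w \<le> 1"
    and u: "u \<in> W" and v: "fst v \<le> 1" "snd v \<le> fst v" "fst v \<le> fst u" "snd u \<le> snd v"
  shows "v \<in> W"
proof -
  have e: "(snd u, snd u) \<in> W" using D box[OF u] by (auto simp: D0_iff)
  have m: "(fst v, snd u) \<in> W"
  proof -
    have "(fst v, snd u) \<in> closed_segment (snd u, snd u) u"
      using v by (intro seg_mem) (auto simp: bt2_def bt_def)
    moreover have "closed_segment (snd u, snd u) u \<subseteq> W" using hv u e by (simp add: hvc_def)
    ultimately show ?thesis by blast
  qed
  have f: "(fst v, fst v) \<in> W" using D v box[OF u] by (auto simp: D0_iff)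
  have "v \<in> closed_segment (fst v, snd u) (fst v, fst v)"
    using v by (intro seg_mem) (auto simp: bt2_def bt_def)
  moreover have "closed_segment (fst v, snd u) (fst v, fst v) \<subseteq> W" using hv m f by (simp add: hvc_def)
  ultimately show ?thesis by blast
qed

lemma shift_int:
  fixes W :: "pt set"
  assumes cl: "\<And>u v. u \<in> W \<Longrightarrow> v \<in> P \<Longrightarrow> R u v \<Longrightarrow> v \<in> W"
    and op: "open P" and inv: "\<And>u v h. R (u + h) (v + h) = R u v"
    and u: "u \<in> interior W" and v: "v \<in> P" and r: "R u v"
  shows "v \<in> interior W"
proof -
  obtain e where e: "e > 0" "ball u e \<subseteq> W" using u mem_interior by blast
  obtain d where d: "d > 0" "ball v d \<subseteq> P" using op v open_contains_ball by blast
  have "ball v (min e d) \<subseteq> W"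
  proof
    fix v' assume v': "v' \<in> ball v (min e d)"
    let ?u' = "u + (v' - v)"
    have "dist u ?u' = dist v v'" by (simp add: dist_norm)
    then have "?u' \<in> W" using e v' by auto
    moreover have "v' \<in> P" using d v' by auto
    moreover have "R ?u' v'"
    proof -
      have e2: "v + (v' - v) = v'" by simp
      have "R ?u' v' = R u v" using inv[where u=u and v=v and h="v' - v"] unfolding e2 .
      then show ?thesis using r by (simp only:)
    qed
    ultimately show "v' \<in> W" using cl by blast
  qed
  then show ?thesis using e d by (metis interior_maximal min_less_iff_conj open_ball centre_in_ball subsetD)
qed

definition Tp :: "pt set" where "Tp = {v. 0 < fst v \<and> fst v < snd v \<and> snd v < 1}"
definition Tm :: "pt set" where "Tm = {v. 0 < snd v \<and> snd v < fst v \<and> fst v < 1}"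

lemma open_Tp: "open Tp"
  unfolding Tp_def by (intro open_Collect_conj open_Collect_less continuous_intros)
lemma open_Tm: "open Tm"
  unfolding Tm_def by (intro open_Collect_conj open_Collect_less continuous_intros)

locale coreset =
  fixes W :: "pt set"
  assumes hv: "hvc W" and D: "D0 \<subseteq> W"
    and box: "\<And>w. w \<in> W \<Longrightarrow> 0 \<le> fst w \<and> fst w \<le> 1 \<and> 0 \<le> snd w \<and> snd w \<le> 1"
begin

lemma DR:
  assumes "u \<in> interior W" "v \<in> Tp" "fst u \<le> fst v" "snd v \<le> snd u"
  shows "v \<in> interior W"
proof (rule shift_int[where P=Tp and R="\<lambda>u v. fst u \<le> fst v \<and> snd v \<le> snd u"])
  show "\<And>u v. u \<in> W \<Longrightarrow> v \<in> Tp \<Longrightarrow> fst u \<le> fst v \<and> snd v \<le> snd u \<Longrightarrow> v \<in> W"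
  proof -
    fix u v assume a: "u \<in> W" "v \<in> Tp" "fst u \<le> fst v \<and> snd v \<le> snd u"
    have "0 \<le> fst v" "fst v \<le> snd v" using a(2) by (auto simp: Tp_def)
    then show "v \<in> W" using W_dr[OF hv D _ a(1)] a(3) box by blast
  qed
  show "open Tp" by (rule open_Tp)
  show "\<And>u v h :: pt. (fst (u + h) \<le> fst (v + h) \<and> snd (v + h) \<le> snd (u + h)) = (fst u \<le> fst v \<and> snd v \<le> snd u)"
    by auto
qed (use assms in auto)

lemma UL:
  assumes "u \<in> interior W" "v \<in> Tm" "fst v \<le> fst u" "snd u \<le> snd v"
  shows "v \<in> interior W"
proof (rule shift_int[where P=Tm and R="\<lambda>u v. fst v \<le> fst u \<and> snd u \<le> snd v"])
  show "\<And>u v. u \<in> W \<Longrightarrow> v \<in> Tm \<Longrightarrow> fst v \<le> fst u \<and> snd u \<le> snd v \<Longrightarrow> v \<in> W"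
  proof -
    fix u v assume a: "u \<in> W" "v \<in> Tm" "fst v \<le> fst u \<and> snd u \<le> snd v"
    have "fst v \<le> 1" "snd v \<le> fst v" using a(2) by (auto simp: Tm_def)
    then show "v \<in> W" using W_ul[OF hv D _ a(1)] a(3) box by blast
  qed
  show "open Tm" by (rule open_Tm)
  show "\<And>u v h :: pt. (fst (v + h) \<le> fst (u + h) \<and> snd (u + h) \<le> snd (v + h)) = (fst v \<le> fst u \<and> snd u \<le> snd v)"
    by auto
qed (use assms in auto)

lemma int_box: "u \<in> interior W \<Longrightarrow> 0 < fst u \<and> fst u < 1 \<and> 0 < snd u \<and> snd u < 1"
proof -
  assume "u \<in> interior W"
  then obtain e where e: "e > 0" "ball u e \<subseteq> W" using mem_interior by blast
  let ?h = "e / 2"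
  have "dist u (u + (?h, 0)) < e" "dist u (u - (?h, 0)) < e" "dist u (u + (0, ?h)) < e" "dist u (u - (0, ?h)) < e"
    using e by (simp_all add: dist_norm)
  then have w: "u + (?h, 0) \<in> W" "u - (?h, 0) \<in> W" "u + (0, ?h) \<in> W" "u - (0, ?h) \<in> W"
    using e by auto
  have "fst u + ?h \<le> 1" using box[OF w(1)] by simp
  moreover have "0 \<le> fst u - ?h" using box[OF w(2)] by simp
  moreover have "snd u + ?h \<le> 1" using box[OF w(3)] by simp
  moreover have "0 \<le> snd u - ?h" using box[OF w(4)] by simp
  ultimately show ?thesis using e(1) by linarith
qed

end

lemma Lsh_eq: "Lsh = Lsh0"
  by (simp add: fun_eq_iff Lsh_def Lsh0_def)

definition canon :: "pt \<Rightarrow> pt \<Rightarrow> pt \<Rightarrow> pt list" where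
  "canon p r q = (if p = r then (if r = q then [p] else [r, q]) else if r = q then [p, q] else [p, r, q])"

lemma path_set_two: "path_set [a, b] = closed_segment a b"
  unfolding path_set_Cons2 path_set_single by auto

lemma L3:
  assumes "p \<noteq> r" "r \<noteq> q" "axis_parallel p r" "axis_parallel r q" "bt2 p r q"
  shows "rect_path [p, r, q] \<and> path_len [p, r, q] = l1_dist p q \<and> card (corner_points [p, r, q]) \<le> 1
     \<and> path_set [p, r, q] = Lsh p r q"
proof -
  have "rect_path [p, r, q]" using assms(1-4) by (simp add: rect_path_Cons2 rect_path_single)
  moreover have "path_len [p, r, q] = l1_dist p q"
    using bt2_l1[OF assms(5)] by (simp add: path_len_Cons2 path_len_single)
  moreover have "card (corner_points [p, r, q]) \<le> 1"
  proof -
    have "corner_points [p, r, q] = (if horizontal p r \<noteq> horizontal r q then {r} else {}) \<union> corner_points [r, q]"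
      by (rule corner_Cons3)
    moreover have "corner_points [r, q] = {}" by (rule corner_short) simp
    ultimately show ?thesis by simp
  qed
  moreover have "path_set [p, r, q] = Lsh p r q"
    unfolding Lsh_def path_set_Cons2[of p r] path_set_two ..
  ultimately show ?thesis by blast
qed

lemma L2:
  assumes "p \<noteq> q" "axis_parallel p q"
  shows "rect_path [p, q] \<and> path_len [p, q] = l1_dist p q \<and> card (corner_points [p, q]) \<le> 1
     \<and> path_set [p, q] = closed_segment p q"
proof -
  have "rect_path [p, q]" using assms by (simp add: rect_path_Cons2 rect_path_single)
  moreover have "path_len [p, q] = l1_dist p q" by (simp add: path_len_Cons2 path_len_single)
  moreover have "corner_points [p, q] = {}" by (rule corner_short) simp
  ultimately show ?thesis using path_set_two by simp
qed

lemma canon_props: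
  assumes pr: "axis_parallel p r" and rq: "axis_parallel r q" and b: "bt2 p r q"
  shows "short_L_path p q (canon p r q) \<and> path_set (canon p r q) = Lsh p r q
     \<and> path_len (canon p r q) = l1_dist p q"
proof -
  let ?c = "canon p r q"
  have P: "rect_path ?c \<and> path_len ?c = l1_dist p q \<and> card (corner_points ?c) \<le> 1
     \<and> path_set ?c = Lsh p r q"
  proof (cases "p = r")
    case True
    show ?thesis
    proof (cases "r = q")
      case True2: True
      have "?c = [p]" using True True2 by (simp add: canon_def)
      moreover have "Lsh p r q = {p}" using True True2 by (simp add: Lsh_def)
      ultimately show ?thesis using True True2
        by (simp add: rect_path_single path_len_single path_set_single l1_dist_def corner_short)
    next
      case False
      have "?c = [r, q]" using True False by (simp add: canon_def)
      moreover have "Lsh p r q = closed_segment r q" using True by (simp add: Lsh_def insert_absorb)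
      ultimately show ?thesis using L2[OF False rq] True by simp
    qed
  next
    case False
    show ?thesis
    proof (cases "r = q")
      case True2: True
      have "?c = [p, q]" using False True2 by (simp add: canon_def)
      moreover have "Lsh p r q = closed_segment p q" using True2 by (simp add: Lsh_def insert_absorb)
      ultimately show ?thesis using L2[of p q] False True2 pr by simp
    next
      case False2: False
      have "?c = [p, r, q]" using False False2 by (simp add: canon_def)
      then show ?thesis using L3[OF False False2 pr rq b] by simp
    qed
  qed
  have hl: "hd ?c = p" "last ?c = q" unfolding canon_def by auto
  have sh: "shortest_rect_path p q ?c"
    unfolding shortest_rect_path_def rect_path_between_def
  proof (intro conjI allI impI)
    show "rect_path ?c" "hd ?c = p" "last ?c = q" using P hl by auto
    fix ps' assume "rect_path ps' \<and> hd ps' = p \<and> last ps' = q"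
    then show "path_len ?c \<le> path_len ps'" using P len_ge[of ps'] by auto
  qed
  show ?thesis using sh P by (simp add: short_L_path_def)
qed

lemma canon1: "\<exists>ps. short_L_path p q ps \<and> path_set ps = Lsh p (fst q, snd p) q"
  using canon_props[of p "(fst q, snd p)" q]
  by (auto simp: axis_parallel_def bt2_def bt_def)

lemma canon2: "\<exists>ps. short_L_path p q ps \<and> path_set ps = Lsh p (fst p, snd q) q"
  using canon_props[of p "(fst p, snd q)" q]
  by (auto simp: axis_parallel_def bt2_def bt_def)

lemma short_sp:
  assumes "shortest_rect_path p q ps"
  shows "sp ps \<and> hd ps = p \<and> last ps = q"
proof -
  obtain c where c: "short_L_path p q c" "path_len c = l1_dist p q"
    using canon_props[of p "(fst q, snd p)" q] by (auto simp: axis_parallel_def bt2_def bt_def)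
  then have "path_len ps \<le> l1_dist p q"
    using assms c(1) unfolding short_L_path_def shortest_rect_path_def by metis
  moreover have "l1_dist (hd ps) (last ps) \<le> path_len ps"
    using assms len_ge unfolding shortest_rect_path_def rect_path_between_def by blast
  ultimately show ?thesis using assms
    unfolding shortest_rect_path_def rect_path_between_def sp_def by auto
qed

lemma shortL_shape:
  assumes "short_L_path p q ps"
  shows "path_set ps = Lsh p (fst q, snd p) q \<or> path_set ps = Lsh p (fst p, snd q) q"
proof -
  have s: "sp ps" "hd ps = p" "last ps = q" and c: "card (corner_points ps) \<le> 1"
    using short_sp assms unfolding short_L_path_def by blast+
  have ne: "ps \<noteq> []" using s(1) by (simp add: sp_def rect_path_def)
  show ?thesis
  proof (cases "length ps \<ge> 2")
    case True
    have "path_set ps = (if horizontal (ps!0) (ps!1) then Lsh p (fst q, snd p) q else Lsh p (fst p, snd q) q)"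
      using shape[OF s(1) True c] unfolding s(2,3) .
    then show ?thesis by (cases "horizontal (ps!0) (ps!1)") simp_all
  next
    case False
    then obtain a where a: "ps = [a]" using ne by (cases ps) (auto simp: Suc_le_eq)
    then have "p = a" "q = a" using s by auto
    then show ?thesis unfolding a path_set_single Lsh_def by simp
  qed
qed

lemma aligned_noc:
  assumes "shortest_rect_path p q ps" "fst p = fst q \<or> snd p = snd q"
  shows "corner_points ps = {}"
proof -
  have s: "sp ps" "hd ps = p" "last ps = q" using short_sp assms(1) by blast+
  have rp: "rect_path ps" using s(1) sp_def by blast
  have allx: "\<And>x. x \<in> set ps \<Longrightarrow> (fst p = fst q \<longrightarrow> fst x = fst p) \<and> (snd p = snd q \<longrightarrow> snd x = snd p)"
  proof -
    fix x assume "x \<in> set ps"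
    then have "bt2 p x q" using sp_M1[OF s(1), of x] s(2,3) by simp
    then show "(fst p = fst q \<longrightarrow> fst x = fst p) \<and> (snd p = snd q \<longrightarrow> snd x = snd p)"
      by (auto simp: bt2_def bt_def)
  qed
  have hor: "\<And>i. Suc i < length ps \<Longrightarrow> horizontal (ps ! i) (ps ! Suc i) = (snd p = snd q)"
  proof -
    fix i assume i: "Suc i < length ps"
    have m: "ps ! i \<in> set ps" "ps ! Suc i \<in> set ps" using i by auto
    have d: "ps ! i \<noteq> ps ! Suc i" using rp i unfolding rect_path_def by auto
    show "horizontal (ps ! i) (ps ! Suc i) = (snd p = snd q)"
    proof (cases "snd p = snd q")
      case True then show ?thesis using allx[OF m(1)] allx[OF m(2)] by (simp add: horizontal_def)
    next
      case False
      then have "fst p = fst q" using assms(2) by simp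
      then have "fst (ps ! i) = fst (ps ! Suc i)" using allx[OF m(1)] allx[OF m(2)] by simp
      then show ?thesis using d False by (auto simp: horizontal_def prod_eq_iff)
    qed
  qed
  show ?thesis
  proof (rule ccontr)
    assume "corner_points ps \<noteq> {}"
    then obtain x where "x \<in> corner_points ps" by blast
    then obtain i where i: "0 < i" "i < length ps - 1"
      "horizontal (ps ! (i - 1)) (ps ! i) \<noteq> horizontal (ps ! i) (ps ! Suc i)"
      unfolding corner_points_def by blast
    have "Suc (i - 1) = i" using i(1) by simp
    then have "horizontal (ps ! (i - 1)) (ps ! i) = (snd p = snd q)"
      using hor[of "i - 1"] i(2) by simp
    moreover have "horizontal (ps ! i) (ps ! Suc i) = (snd p = snd q)" using hor[of i] i(2) by simp
    ultimately show False using i(3) by simp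
  qed
qed

lemma aligned_seg:
  assumes "shortest_rect_path p q ps" "fst p = fst q \<or> snd p = snd q"
  shows "closed_segment p q \<subseteq> path_set ps"
proof -
  have "short_L_path p q ps" using aligned_noc[OF assms] assms(1) by (simp add: short_L_path_def)
  then have "path_set ps = Lsh p (fst q, snd p) q \<or> path_set ps = Lsh p (fst p, snd q) q"
    by (rule shortL_shape)
  moreover have "(fst q, snd p) = p \<or> (fst q, snd p) = q" using assms(2) by (auto simp: prod_eq_iff)
  moreover have "(fst p, snd q) = p \<or> (fst p, snd q) = q" using assms(2) by (auto simp: prod_eq_iff)
  moreover have sub: "\<And>r. r = p \<or> r = q \<Longrightarrow> closed_segment p q \<subseteq> Lsh p r q"
    unfolding Lsh_def by blast
  ultimately show ?thesis by metis
qed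

lemma rc_hvc: "rect_convex W \<Longrightarrow> hvc W"
  unfolding hvc_def
proof (intro ballI impI)
  fix u v assume rc: "rect_convex W" and uv: "u \<in> W" "v \<in> W" and al: "fst u = fst v \<or> snd u = snd v"
  obtain ps where ps: "shortest_rect_path u v ps" "path_set ps \<subseteq> W"
    using rc uv unfolding rect_convex_def by blast
  show "closed_segment u v \<subseteq> W" using aligned_seg[OF ps(1) al] ps(2) by blast
qed

lemma cross:
  fixes z e :: pt
  assumes "(snd z - fst z \<ge> 0 \<and> snd e - fst e \<le> 0) \<or> (snd z - fst z \<le> 0 \<and> snd e - fst e \<ge> 0)"
  shows "\<exists>w\<in>closed_segment z e. fst w = snd w"
proof (cases "snd z - fst z = snd e - fst e")
  case True
  then have "fst z = snd z" using assms by auto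
  then show ?thesis by (intro bexI[of _ z]) auto
next
  case False
  define az where "az = snd z - fst z"
  define ae where "ae = snd e - fst e"
  define t where "t = az / (az - ae)"
  have ne: "az - ae \<noteq> 0" using False by (simp add: az_def ae_def)
  have t01: "0 \<le> t \<and> t \<le> 1"
    using assms ne unfolding t_def az_def[symmetric] ae_def[symmetric]
    by (auto simp: divide_simps)
  define w where "w = ((1 - t) * fst z + t * fst e, (1 - t) * snd z + t * snd e)"
  have "w \<in> closed_segment z e" using t01 by (intro seg_param[of t]) (auto simp: w_def)
  moreover have "snd w - fst w = az - t * (az - ae)"
    by (simp add: w_def az_def ae_def algebra_simps)
  moreover have "t * (az - ae) = az" using ne by (simp add: t_def)
  ultimately show ?thesis by (intro bexI[of _ w]) auto
qed

context coreset begin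

lemma Gp:
  assumes z: "z \<in> interior W" "fst z < snd z" and e: "fst z \<le> fst e" "snd e \<le> snd z"
  shows "(e \<in> interior W \<and> fst e < snd e) \<or> (\<exists>w\<in>closed_segment z e. w \<in> D0)"
proof (cases "fst e < snd e")
  case True
  have "e \<in> Tp" using int_box[OF z(1)] e True by (auto simp: Tp_def)
  then show ?thesis using DR[OF z(1) _ e] True by blast
next
  case False
  then obtain w where w: "w \<in> closed_segment z e" "fst w = snd w"
    using cross[of z e] z(2) by auto
  have "bt2 z w e" using w(1) by (rule seg_bt2)
  then have "w \<in> D0" using w(2) int_box[OF z(1)] e unfolding D0_iff by (auto simp: bt2_def bt_def)
  then show ?thesis using w(1) by blast
qed

lemma Gm:
  assumes z: "z \<in> interior W" "snd z < fst z" and e: "fst e \<le> fst z" "snd z \<le> snd e"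
  shows "(e \<in> interior W \<and> snd e < fst e) \<or> (\<exists>w\<in>closed_segment z e. w \<in> D0)"
proof (cases "snd e < fst e")
  case True
  have "e \<in> Tm" using int_box[OF z(1)] e True by (auto simp: Tm_def)
  then show ?thesis using UL[OF z(1) _ e] True by blast
next
  case False
  then obtain w where w: "w \<in> closed_segment z e" "fst w = snd w"
    using cross[of z e] z(2) by auto
  have "bt2 z w e" using w(1) by (rule seg_bt2)
  then have "w \<in> D0" using w(2) int_box[OF z(1)] e unfolding D0_iff by (auto simp: bt2_def bt_def)
  then show ?thesis using w(1) by blast
qed

lemma int_D0: "z \<in> interior W \<Longrightarrow> fst z = snd z \<Longrightarrow> z \<in> D0"
  using int_box[of z] by (auto simp: D0_iff)

lemma subseg1: "x \<in> closed_segment a b \<Longrightarrow> closed_segment x b \<subseteq> closed_segment a b"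
  by (simp add: subset_closed_segment)
lemma subseg2: "x \<in> closed_segment a b \<Longrightarrow> closed_segment x a \<subseteq> closed_segment a b"
  by (simp add: subset_closed_segment)

lemma dec:
  assumes a: "a \<notin> interior W" and c: "c \<notin> interior W"
    and ab: "fst a \<le> fst b" "snd b \<le> snd a" and bc: "fst b \<le> fst c" "snd c \<le> snd b"
    and z: "z \<in> Lsh0 a b c" "z \<in> interior W"
  shows "Lsh0 a b c \<inter> D0 \<noteq> {}"
proof (rule ccontr)
  assume "\<not> Lsh0 a b c \<inter> D0 \<noteq> {}"
  then have no: "\<And>w. w \<in> Lsh0 a b c \<Longrightarrow> w \<notin> D0" by blast
  have noseg: "\<And>x y. closed_segment x y \<subseteq> Lsh0 a b c \<Longrightarrow> \<not> (\<exists>w\<in>closed_segment x y. w \<in> D0)"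
    using no by blast
  have sab: "closed_segment a b \<subseteq> Lsh0 a b c" and sbc: "closed_segment b c \<subseteq> Lsh0 a b c"
    by (auto simp: Lsh0_def)
  consider "fst z = snd z" | "fst z < snd z" | "snd z < fst z" by linarith
  then show False
  proof cases
    case 1 then show False using int_D0[OF z(2)] no z(1) by blast
  next
    case 2
    show False
    proof (cases "z \<in> closed_segment a b")
      case True
      have "bt2 a z b" using True by (rule seg_bt2)
      then have le: "fst z \<le> fst b" "snd b \<le> snd z" using ab by (auto simp: bt2_def bt_def)
      have s1: "closed_segment z b \<subseteq> Lsh0 a b c" using subseg1[OF True] sab by blast
      from Gp[OF z(2) 2 le] noseg[OF s1] have bi: "b \<in> interior W" "fst b < snd b" by blast+
      from Gp[OF bi bc] noseg[OF sbc] c show False by blast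
    next
      case False
      then have zz: "z \<in> closed_segment b c" using z(1) by (auto simp: Lsh0_def)
      have "bt2 b z c" using zz by (rule seg_bt2)
      then have le: "fst z \<le> fst c" "snd c \<le> snd z" using bc by (auto simp: bt2_def bt_def)
      have s1: "closed_segment z c \<subseteq> Lsh0 a b c" using subseg1[OF zz] sbc by blast
      from Gp[OF z(2) 2 le] noseg[OF s1] c show False by blast
    qed
  next
    case 3
    show False
    proof (cases "z \<in> closed_segment b c")
      case True
      have "bt2 b z c" using True by (rule seg_bt2)
      then have le: "fst b \<le> fst z" "snd z \<le> snd b" using bc by (auto simp: bt2_def bt_def)
      have s1: "closed_segment z b \<subseteq> Lsh0 a b c" using subseg2[OF True] sbc by blast
      from Gm[OF z(2) 3 le] noseg[OF s1] have bi: "b \<in> interior W" "snd b < fst b" by blast+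
      have sba: "closed_segment b a \<subseteq> Lsh0 a b c" using sab by (simp add: closed_segment_commute)
      from Gm[OF bi ab] noseg[OF sba] a show False by blast
    next
      case False
      then have zz: "z \<in> closed_segment a b" using z(1) by (auto simp: Lsh0_def)
      have "bt2 a z b" using zz by (rule seg_bt2)
      then have le: "fst a \<le> fst z" "snd z \<le> snd a" using ab by (auto simp: bt2_def bt_def)
      have s1: "closed_segment z a \<subseteq> Lsh0 a b c" using subseg2[OF zz] sab by blast
      from Gm[OF z(2) 3 le] noseg[OF s1] a show False by blast
    qed
  qed
qed

end

context coreset begin

lemma inR:
  assumes "fst p \<le> fst q" "snd p \<le> snd q"
    and "x \<in> Lsh0 p (fst q, snd p) q \<or> x \<in> Lsh0 p (fst p, snd q) q"
  shows "fst p \<le> fst x \<and> fst x \<le> fst q \<and> snd p \<le> snd x \<and> snd x \<le> snd q"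
proof -
  have "bt2 p x (fst q, snd p) \<or> bt2 (fst q, snd p) x q \<or> bt2 p x (fst p, snd q) \<or> bt2 (fst p, snd q) x q"
    using assms(3) seg_bt2 unfolding Lsh0_def by blast
  then show ?thesis using assms(1,2) by (auto simp: bt2_def bt_def)
qed

lemma inc:
  assumes p: "p \<notin> interior W" and q: "q \<notin> interior W"
    and pq: "fst p \<le> fst q" "snd p \<le> snd q"
    and z: "z \<in> Lsh0 p (fst q, snd p) q" "z \<in> interior W"
    and z': "z' \<in> Lsh0 p (fst p, snd q) q" "z' \<in> interior W"
  shows "Lsh0 p (fst q, snd p) q \<inter> D0 \<noteq> {} \<and> Lsh0 p (fst p, snd q) q \<inter> D0 \<noteq> {}"
proof -
  define se where "se = (fst q, snd p)"
  define nw where "nw = (fst p, snd q)"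
  have zR: "fst p \<le> fst z \<and> fst z \<le> fst q \<and> snd p \<le> snd z \<and> snd z \<le> snd q"
    using inR[OF pq] z(1) by blast
  have z'R: "fst p \<le> fst z' \<and> fst z' \<le> fst q \<and> snd p \<le> snd z' \<and> snd z' \<le> snd q"
    using inR[OF pq] z'(1) by blast
  have segR: "\<And>x w. fst p \<le> fst x \<and> fst x \<le> fst q \<and> snd p \<le> snd x \<and> snd x \<le> snd q \<Longrightarrow>
      (w \<in> closed_segment x p \<or> w \<in> closed_segment x q) \<Longrightarrow>
      fst p \<le> fst w \<and> fst w \<le> fst q \<and> snd p \<le> snd w \<and> snd w \<le> snd q"
  proof -
    fix x w assume xR: "fst p \<le> fst x \<and> fst x \<le> fst q \<and> snd p \<le> snd x \<and> snd x \<le> snd q"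
      and "w \<in> closed_segment x p \<or> w \<in> closed_segment x q"
    then have "bt2 x w p \<or> bt2 x w q" using seg_bt2 by blast
    then show "fst p \<le> fst w \<and> fst w \<le> fst q \<and> snd p \<le> snd w \<and> snd w \<le> snd q"
      using xR pq by (auto simp: bt2_def bt_def)
  qed
  have segs: "closed_segment p se \<subseteq> Lsh0 p se q" "closed_segment se q \<subseteq> Lsh0 p se q"
    "closed_segment p nw \<subseteq> Lsh0 p nw q" "closed_segment nw q \<subseteq> Lsh0 p nw q"
    by (auto simp: Lsh0_def)
  have part1: "Lsh0 p se q \<inter> D0 \<noteq> {}"
  proof (rule ccontr)
    assume "\<not> Lsh0 p se q \<inter> D0 \<noteq> {}"
    then have no: "\<And>x y. closed_segment x y \<subseteq> Lsh0 p se q \<Longrightarrow> \<not> (\<exists>w\<in>closed_segment x y. w \<in> D0)"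
      and noz: "z \<notin> D0" using z(1) se_def by blast+
    consider "fst z = snd z" | "fst z < snd z" | "snd z < fst z" by linarith
    then show False
    proof cases
      case 1 then show False using int_D0[OF z(2)] noz by blast
    next
      case 2
      have sei: "se \<in> interior W" "fst se < snd se"
      proof -
        have "(se \<in> interior W \<and> fst se < snd se)"
        proof (cases "z \<in> closed_segment p se")
          case True
          have "bt2 p z se" using True by (rule seg_bt2)
          then have le: "fst z \<le> fst se" "snd se \<le> snd z" using pq by (auto simp: bt2_def bt_def se_def)
          have "closed_segment z se \<subseteq> Lsh0 p se q" using subseg1[OF True] segs by blast
          then show ?thesis using Gp[OF z(2) 2 le] no by blast
        next
          case False
          then have zz: "z \<in> closed_segment se q" using z(1) by (auto simp: Lsh0_def se_def)
          have "bt2 se z q" using zz by (rule seg_bt2)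
          then have le: "fst z \<le> fst se" "snd se \<le> snd z" using pq by (auto simp: bt2_def bt_def se_def)
          have "closed_segment z se \<subseteq> Lsh0 p se q" using subseg2[OF zz] segs by blast
          then show ?thesis using Gp[OF z(2) 2 le] no by blast
        qed
        then show "se \<in> interior W" "fst se < snd se" by auto
      qed
      have pos: "\<And>x. fst p \<le> fst x \<and> fst x \<le> fst q \<and> snd p \<le> snd x \<and> snd x \<le> snd q \<Longrightarrow> fst x < snd x"
        using sei(2) by (auto simp: se_def)
      have z'2: "fst z' < snd z'" using pos z'R by blast
      have notD: "\<And>w. fst p \<le> fst w \<and> fst w \<le> fst q \<and> snd p \<le> snd w \<and> snd w \<le> snd q \<Longrightarrow> w \<notin> D0"
      proof -
        fix w assume "fst p \<le> fst w \<and> fst w \<le> fst q \<and> snd p \<le> snd w \<and> snd w \<le> snd q"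
        then have "fst w < snd w" by (rule pos)
        then show "w \<notin> D0" by (auto simp: D0_iff)
      qed
      show False
      proof (cases "z' \<in> closed_segment p nw")
        case True
        have "bt2 p z' nw" using True by (rule seg_bt2)
        then have le: "fst z' \<le> fst p" "snd p \<le> snd z'" using pq by (auto simp: bt2_def bt_def nw_def)
        have "\<not> (\<exists>w\<in>closed_segment z' p. w \<in> D0)" using segR[OF z'R] notD by blast
        then show False using Gp[OF z'(2) z'2 le(1) le(2)] p by blast
      next
        case False
        then have zz: "z' \<in> closed_segment nw q" using z'(1) by (auto simp: Lsh0_def nw_def)
        have "bt2 nw z' q" using zz by (rule seg_bt2)
        then have le: "snd q \<le> snd z'" using pq by (auto simp: bt2_def bt_def nw_def)
        have "\<not> (\<exists>w\<in>closed_segment z' q. w \<in> D0)" using segR[OF z'R] notD by blast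
        moreover have "fst z' \<le> fst q" using z'R by blast
        ultimately show False using Gp[OF z'(2) z'2 _ le] q by blast
      qed
    next
      case 3
      show False
      proof (cases "z \<in> closed_segment p se")
        case True
        have "bt2 p z se" using True by (rule seg_bt2)
        then have le: "snd z \<le> snd p" using pq by (auto simp: bt2_def bt_def se_def)
        have "closed_segment z p \<subseteq> Lsh0 p se q" using subseg2[OF True] segs by blast
        then have n: "\<not> (\<exists>w\<in>closed_segment z p. w \<in> D0)" by (rule no)
        have "fst p \<le> fst z" using zR by blast
        then show False using Gm[OF z(2) 3 _ le] n p by blast
      next
        case False
        then have zz: "z \<in> closed_segment se q" using z(1) by (auto simp: Lsh0_def se_def)
        have "bt2 se z q" using zz by (rule seg_bt2)
        then have le: "fst q \<le> fst z" using pq by (auto simp: bt2_def bt_def se_def)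
        have "closed_segment z q \<subseteq> Lsh0 p se q" using subseg1[OF zz] segs by blast
        then have n: "\<not> (\<exists>w\<in>closed_segment z q. w \<in> D0)" by (rule no)
        have "snd z \<le> snd q" using zR by blast
        then show False using Gm[OF z(2) 3 le] n q by blast
      qed
    qed
  qed
  have part2: "Lsh0 p nw q \<inter> D0 \<noteq> {}"
  proof (rule ccontr)
    assume "\<not> Lsh0 p nw q \<inter> D0 \<noteq> {}"
    then have no: "\<And>x y. closed_segment x y \<subseteq> Lsh0 p nw q \<Longrightarrow> \<not> (\<exists>w\<in>closed_segment x y. w \<in> D0)"
      and noz: "z' \<notin> D0" using z'(1) nw_def by blast+
    consider "fst z' = snd z'" | "fst z' < snd z'" | "snd z' < fst z'" by linarith
    then show False
    proof cases
      case 1 then show False using int_D0[OF z'(2)] noz by blast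
    next
      case 2
      show False
      proof (cases "z' \<in> closed_segment p nw")
        case True
        have "bt2 p z' nw" using True by (rule seg_bt2)
        then have le: "fst z' \<le> fst p" using pq by (auto simp: bt2_def bt_def nw_def)
        have "closed_segment z' p \<subseteq> Lsh0 p nw q" using subseg2[OF True] segs by blast
        then have n: "\<not> (\<exists>w\<in>closed_segment z' p. w \<in> D0)" by (rule no)
        have "snd p \<le> snd z'" using z'R by blast
        then show False using Gp[OF z'(2) 2 le] n p by blast
      next
        case False
        then have zz: "z' \<in> closed_segment nw q" using z'(1) by (auto simp: Lsh0_def nw_def)
        have "bt2 nw z' q" using zz by (rule seg_bt2)
        then have le: "snd q \<le> snd z'" using pq by (auto simp: bt2_def bt_def nw_def)
        have "closed_segment z' q \<subseteq> Lsh0 p nw q" using subseg1[OF zz] segs by blast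
        then have n: "\<not> (\<exists>w\<in>closed_segment z' q. w \<in> D0)" by (rule no)
        have "fst z' \<le> fst q" using z'R by blast
        then show False using Gp[OF z'(2) 2 _ le] n q by blast
      qed
    next
      case 3
      have nwi: "nw \<in> interior W" "snd nw < fst nw"
      proof -
        have "(nw \<in> interior W \<and> snd nw < fst nw)"
        proof (cases "z' \<in> closed_segment p nw")
          case True
          have "bt2 p z' nw" using True by (rule seg_bt2)
          then have le: "fst nw \<le> fst z'" "snd z' \<le> snd nw" using pq by (auto simp: bt2_def bt_def nw_def)
          have "closed_segment z' nw \<subseteq> Lsh0 p nw q" using subseg1[OF True] segs by blast
          then show ?thesis using Gm[OF z'(2) 3 le] no by blast
        next
          case False
          then have zz: "z' \<in> closed_segment nw q" using z'(1) by (auto simp: Lsh0_def nw_def)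
          have "bt2 nw z' q" using zz by (rule seg_bt2)
          then have le: "fst nw \<le> fst z'" "snd z' \<le> snd nw" using pq by (auto simp: bt2_def bt_def nw_def)
          have "closed_segment z' nw \<subseteq> Lsh0 p nw q" using subseg2[OF zz] segs by blast
          then show ?thesis using Gm[OF z'(2) 3 le] no by blast
        qed
        then show "nw \<in> interior W" "snd nw < fst nw" by auto
      qed
      have neg: "\<And>x. fst p \<le> fst x \<and> fst x \<le> fst q \<and> snd p \<le> snd x \<and> snd x \<le> snd q \<Longrightarrow> snd x < fst x"
        using nwi(2) by (auto simp: nw_def)
      have z3: "snd z < fst z" using neg zR by blast
      have notD: "\<And>w. fst p \<le> fst w \<and> fst w \<le> fst q \<and> snd p \<le> snd w \<and> snd w \<le> snd q \<Longrightarrow> w \<notin> D0"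
      proof -
        fix w assume "fst p \<le> fst w \<and> fst w \<le> fst q \<and> snd p \<le> snd w \<and> snd w \<le> snd q"
        then have "snd w < fst w" by (rule neg)
        then show "w \<notin> D0" by (auto simp: D0_iff)
      qed
      show False
      proof (cases "z \<in> closed_segment p se")
        case True
        have "bt2 p z se" using True by (rule seg_bt2)
        then have le: "snd z \<le> snd p" using pq by (auto simp: bt2_def bt_def se_def)
        have "\<not> (\<exists>w\<in>closed_segment z p. w \<in> D0)" using segR[OF zR] notD by blast
        moreover have "fst p \<le> fst z" using zR by blast
        ultimately show False using Gm[OF z(2) z3 _ le] p by blast
      next
        case False
        then have zz: "z \<in> closed_segment se q" using z(1) by (auto simp: Lsh0_def se_def)
        have "bt2 se z q" using zz by (rule seg_bt2)
        then have le: "fst q \<le> fst z" using pq by (auto simp: bt2_def bt_def se_def)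
        have "\<not> (\<exists>w\<in>closed_segment z q. w \<in> D0)" using segR[OF zR] notD by blast
        moreover have "snd z \<le> snd q" using zR by blast
        ultimately show False using Gm[OF z(2) z3 le] q by blast
      qed
    qed
  qed
  show ?thesis using part1 part2 by (simp add: se_def nw_def)
qed

lemma Lsh0_sym: "Lsh0 q r p = Lsh0 p r q"
  by (auto simp: Lsh0_def closed_segment_commute)

theorem core:
  assumes p: "p \<notin> interior W" and q: "q \<notin> interior W"
    and n1: "Lsh0 p (fst q, snd p) q \<inter> interior W \<noteq> {}"
    and n2: "Lsh0 p (fst p, snd q) q \<inter> interior W \<noteq> {}"
    and r: "r \<in> {(fst q, snd p), (fst p, snd q)}"
  shows "Lsh0 p r q \<inter> D0 \<noteq> {}"
proof -
  have main: "Lsh0 p r q \<inter> D0 \<noteq> {}"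
    if p: "p \<notin> interior W" and q: "q \<notin> interior W"
    and n1: "Lsh0 p (fst q, snd p) q \<inter> interior W \<noteq> {}"
    and n2: "Lsh0 p (fst p, snd q) q \<inter> interior W \<noteq> {}"
    and r: "r \<in> {(fst q, snd p), (fst p, snd q)}"
    and le: "fst p \<le> fst q" for p q r
  proof (cases "snd p \<le> snd q")
    case True
    obtain z where z: "z \<in> Lsh0 p (fst q, snd p) q" "z \<in> interior W" using n1 by blast
    obtain z' where z': "z' \<in> Lsh0 p (fst p, snd q) q" "z' \<in> interior W" using n2 by blast
    show ?thesis using inc[OF p q le True z z'] r by auto
  next
    case False
    obtain z where z: "z \<in> Lsh0 p r q" "z \<in> interior W" using n1 n2 r by blast
    show ?thesis
    proof (rule dec[OF p q _ _ _ _ z])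
      show "fst p \<le> fst r" "snd r \<le> snd p" "fst r \<le> fst q" "snd q \<le> snd r"
        using r le False by auto
    qed
  qed
  show ?thesis
  proof (cases "fst p \<le> fst q")
    case True then show ?thesis using main[OF p q n1 n2 r] by blast
  next
    case False
    have n1': "Lsh0 q (fst p, snd q) p \<inter> interior W \<noteq> {}" using n2 Lsh0_sym by metis
    have n2': "Lsh0 q (fst q, snd p) p \<inter> interior W \<noteq> {}" using n1 Lsh0_sym by metis
    have "Lsh0 q r p \<inter> D0 \<noteq> {}" using main[OF q p n1' n2' _] r False by auto
    then show ?thesis using Lsh0_sym by metis
  qed
qed

end

definition aff :: "real \<Rightarrow> real \<Rightarrow> real \<Rightarrow> real \<Rightarrow> pt \<Rightarrow> pt" where
  "aff \<alpha> \<beta> \<gamma> \<delta> v = (\<alpha> * fst v + \<beta>, \<gamma> * snd v + \<delta>)"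

definition linp :: "real \<Rightarrow> real \<Rightarrow> pt \<Rightarrow> pt" where
  "linp \<alpha> \<gamma> v = (\<alpha> * fst v, \<gamma> * snd v)"

lemma linear_linp: "linear (linp \<alpha> \<gamma>)"
  by (rule linearI) (auto simp: linp_def algebra_simps)

lemma aff_split: "aff \<alpha> \<beta> \<gamma> \<delta> = (\<lambda>x. (\<beta>, \<delta>) + x) \<circ> linp \<alpha> \<gamma>"
  by (auto simp: fun_eq_iff aff_def linp_def)

lemma aff_seg: "aff \<alpha> \<beta> \<gamma> \<delta> ` closed_segment u v = closed_segment (aff \<alpha> \<beta> \<gamma> \<delta> u) (aff \<alpha> \<beta> \<gamma> \<delta> v)"
proof -
  have "closed_segment (aff \<alpha> \<beta> \<gamma> \<delta> u) (aff \<alpha> \<beta> \<gamma> \<delta> v)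
      = closed_segment ((\<beta>, \<delta>) + linp \<alpha> \<gamma> u) ((\<beta>, \<delta>) + linp \<alpha> \<gamma> v)"
    by (simp add: aff_split)
  also have "... = (\<lambda>x. (\<beta>, \<delta>) + x) ` closed_segment (linp \<alpha> \<gamma> u) (linp \<alpha> \<gamma> v)"
    by (rule closed_segment_translation)
  also have "... = (\<lambda>x. (\<beta>, \<delta>) + x) ` (linp \<alpha> \<gamma> ` closed_segment u v)"
    by (simp add: closed_segment_linear_image[OF linear_linp])
  also have "... = aff \<alpha> \<beta> \<gamma> \<delta> ` closed_segment u v"
    by (simp add: aff_split image_comp)
  finally show ?thesis by simp
qed

lemma inj_linp: "\<alpha> \<noteq> 0 \<Longrightarrow> \<gamma> \<noteq> 0 \<Longrightarrow> inj (linp \<alpha> \<gamma>)"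
  by (auto simp: inj_def linp_def prod_eq_iff)

lemma inj_aff: "\<alpha> \<noteq> 0 \<Longrightarrow> \<gamma> \<noteq> 0 \<Longrightarrow> inj (aff \<alpha> \<beta> \<gamma> \<delta>)"
  by (auto simp: inj_def aff_def prod_eq_iff)

lemma aff_int:
  assumes "\<alpha> \<noteq> 0" "\<gamma> \<noteq> 0"
  shows "interior (aff \<alpha> \<beta> \<gamma> \<delta> ` S) = aff \<alpha> \<beta> \<gamma> \<delta> ` interior S"
proof -
  have "aff \<alpha> \<beta> \<gamma> \<delta> ` S = (+) (\<beta>, \<delta>) ` (linp \<alpha> \<gamma> ` S)"
    by (simp add: aff_split image_comp)
  then have "interior (aff \<alpha> \<beta> \<gamma> \<delta> ` S) = (+) (\<beta>, \<delta>) ` interior (linp \<alpha> \<gamma> ` S)"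
    by (simp add: interior_translation)
  also have "... = (+) (\<beta>, \<delta>) ` (linp \<alpha> \<gamma> ` interior S)"
    using interior_injective_linear_image[OF linear_linp inj_linp[OF assms]] by simp
  also have "... = aff \<alpha> \<beta> \<gamma> \<delta> ` interior S"
    by (simp add: aff_split image_comp)
  finally show ?thesis .
qed

lemma aff_Lsh: "aff \<alpha> \<beta> \<gamma> \<delta> ` Lsh p r q = Lsh0 (aff \<alpha> \<beta> \<gamma> \<delta> p) (aff \<alpha> \<beta> \<gamma> \<delta> r) (aff \<alpha> \<beta> \<gamma> \<delta> q)"
  unfolding Lsh_def Lsh0_def image_Un aff_seg ..

lemma aff_r: "aff \<alpha> \<beta> \<gamma> \<delta> (fst q, snd p) = (fst (aff \<alpha> \<beta> \<gamma> \<delta> q), snd (aff \<alpha> \<beta> \<gamma> \<delta> p))"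
  by (simp add: aff_def)

lemma aff_hvc:
  assumes "\<alpha> \<noteq> 0" "\<gamma> \<noteq> 0" "hvc W"
  shows "hvc (aff \<alpha> \<beta> \<gamma> \<delta> ` W)"
  unfolding hvc_def
proof (intro ballI impI)
  fix u' v' assume u': "u' \<in> aff \<alpha> \<beta> \<gamma> \<delta> ` W" and v': "v' \<in> aff \<alpha> \<beta> \<gamma> \<delta> ` W"
    and al: "fst u' = fst v' \<or> snd u' = snd v'"
  obtain u v where uv: "u \<in> W" "v \<in> W" "u' = aff \<alpha> \<beta> \<gamma> \<delta> u" "v' = aff \<alpha> \<beta> \<gamma> \<delta> v"
    using u' v' by blast
  have "fst u = fst v \<or> snd u = snd v" using al assms(1,2) uv(3,4) by (auto simp: aff_def)
  then have "closed_segment u v \<subseteq> W" using assms(3) uv(1,2) unfolding hvc_def by blast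
  then show "closed_segment u' v' \<subseteq> aff \<alpha> \<beta> \<gamma> \<delta> ` W" using uv(3,4) aff_seg by (metis image_mono)
qed

lemma key0:
  fixes \<omega> :: "pt set"
  assumes a0: "\<alpha> \<noteq> 0" and g0: "\<gamma> \<noteq> 0"
    and hv: "hvc \<omega>"
    and box: "\<And>w. w \<in> \<omega> \<Longrightarrow> 0 \<le> fst (aff \<alpha> \<beta> \<gamma> \<delta> w) \<and> fst (aff \<alpha> \<beta> \<gamma> \<delta> w) \<le> 1 \<and>
                 0 \<le> snd (aff \<alpha> \<beta> \<gamma> \<delta> w) \<and> snd (aff \<alpha> \<beta> \<gamma> \<delta> w) \<le> 1"
    and fc: "aff \<alpha> \<beta> \<gamma> \<delta> cc = (0, 0)" and fd: "aff \<alpha> \<beta> \<gamma> \<delta> dd = (1, 1)"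
    and sd: "closed_segment cc dd \<subseteq> \<omega>"
    and p: "p \<notin> interior \<omega>" and q: "q \<notin> interior \<omega>"
    and n1: "Lsh p (fst q, snd p) q \<inter> interior \<omega> \<noteq> {}"
    and n2: "Lsh p (fst p, snd q) q \<inter> interior \<omega> \<noteq> {}"
    and r: "r \<in> {(fst q, snd p), (fst p, snd q)}"
  shows "Lsh p r q \<inter> closed_segment cc dd \<noteq> {}"
proof -
  let ?f = "aff \<alpha> \<beta> \<gamma> \<delta>"
  let ?W = "?f ` \<omega>"
  have inj: "inj ?f" using inj_aff[OF a0 g0] .
  have iW: "interior ?W = ?f ` interior \<omega>" by (rule aff_int[OF a0 g0])
  have Deq: "D0 = ?f ` closed_segment cc dd" using aff_seg fc fd by metis
  interpret coreset ?W
  proof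
    show "hvc ?W" by (rule aff_hvc[OF a0 g0 hv])
    show "D0 \<subseteq> ?W" using Deq sd by blast
    show "\<And>w. w \<in> ?W \<Longrightarrow> 0 \<le> fst w \<and> fst w \<le> 1 \<and> 0 \<le> snd w \<and> snd w \<le> 1" using box by blast
  qed
  have fp: "?f p \<notin> interior ?W" unfolding iW using p inj by (simp add: inj_image_mem_iff)
  have fq: "?f q \<notin> interior ?W" unfolding iW using q inj by (simp add: inj_image_mem_iff)
  have im: "\<And>A B. A \<inter> B \<noteq> {} \<Longrightarrow> ?f ` A \<inter> ?f ` B \<noteq> {}" by blast
  have n1': "Lsh0 (?f p) (fst (?f q), snd (?f p)) (?f q) \<inter> interior ?W \<noteq> {}"
    using im[OF n1] unfolding iW aff_Lsh aff_r .
  have n2': "Lsh0 (?f p) (fst (?f p), snd (?f q)) (?f q) \<inter> interior ?W \<noteq> {}"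
  proof -
    have e: "?f (fst p, snd q) = (fst (?f p), snd (?f q))" by (simp add: aff_def)
    show ?thesis using im[OF n2] unfolding iW aff_Lsh e .
  qed
  have r': "?f r \<in> {(fst (?f q), snd (?f p)), (fst (?f p), snd (?f q))}"
    using r by (auto simp: aff_def)
  have "Lsh0 (?f p) (?f r) (?f q) \<inter> D0 \<noteq> {}" by (rule core[OF fp fq n1' n2' r'])
  then have "?f ` Lsh p r q \<inter> ?f ` closed_segment cc dd \<noteq> {}" unfolding aff_Lsh using Deq by simp
  then show ?thesis unfolding image_Int[OF inj, symmetric] by blast
qed

lemma jordan_pair:
  fixes g :: "real \<Rightarrow> real \<times> real"
  assumes "simple_path g" "pathfinish g = pathstart g"
  shows "inside (path_image g) \<noteq> {} \<and> path_image g \<subseteq> closure (inside (path_image g))"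
proof -
  let ?B = "path_image g"
  have h1: "?B homeomorphic sphere (0::complex) 1"
    by (rule homeomorphic_simple_path_image_circle[OF assms]) simp
  have h2: "sphere (0::complex) 1 homeomorphic sphere (0::real\<times>real) 1"
    by (rule homeomorphic_spheres_gen) auto
  have hom: "?B homeomorphic sphere (0::real\<times>real) 1"
    using homeomorphic_trans[OF h1 h2] .
  have nc: "\<not> connected (- ?B)"
    using Jordan_Brouwer_separation[OF hom] by simp
  have bB: "bounded ?B"
    using assms(1) bounded_simple_path_image by blast
  obtain C where C: "C \<in> components (- ?B)" "bounded C"
    using cobounded_has_bounded_component[of "- ?B"] nc bB by auto
  have fr: "frontier C = ?B"
    using Jordan_Brouwer_frontier[OF hom C(1)] by simp
  have Csub: "C \<subseteq> inside ?B"
  proof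
    fix x assume "x \<in> C"
    then have "C = connected_component_set (- ?B) x" "x \<notin> ?B"
      using C(1) components_iff in_components_subset
      by (metis connected_component_eq mem_Collect_eq, blast)
    then show "x \<in> inside ?B" using C(2) by (simp add: inside_def)
  qed
  have "C \<noteq> {}" using C(1) in_components_nonempty by blast
  moreover have "?B \<subseteq> closure (inside ?B)"
    using fr Csub closure_mono frontier_def by (metis Diff_subset order_trans)
  ultimately show ?thesis using Csub by blast
qed

fun polyl :: "pt list \<Rightarrow> real \<Rightarrow> pt" where
  "polyl (a # b # c # rest) = linepath a b +++ polyl (b # c # rest)"
| "polyl [a, b] = linepath a b"
| "polyl _ = linepath 0 0"

lemma polyl_props:
  assumes "length xs \<ge> 2"
    and "\<forall>i < length xs - 1. xs!i \<noteq> xs!Suc i"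
    and "\<forall>i j. i < j \<and> j < length xs - 1 \<longrightarrow>
           closed_segment (xs!i) (xs!Suc i) \<inter> closed_segment (xs!j) (xs!Suc j)
             \<subseteq> (if j = Suc i then {xs!j} else {})"
  shows "arc (polyl xs) \<and> path_image (polyl xs) = (\<Union>i<length xs - 1. closed_segment (xs!i) (xs!Suc i))
     \<and> pathstart (polyl xs) = hd xs \<and> pathfinish (polyl xs) = last xs"
  using assms
proof (induction xs rule: polyl.induct)
  case (1 a b c rest)
  let ?ys = "b # c # rest"
  have IH: "arc (polyl ?ys) \<and> path_image (polyl ?ys) = (\<Union>i<length ?ys - 1. closed_segment (?ys!i) (?ys!Suc i))
     \<and> pathstart (polyl ?ys) = hd ?ys \<and> pathfinish (polyl ?ys) = last ?ys"
  proof (rule "1.IH")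
    show "2 \<le> length ?ys" by simp
    show "\<forall>i<length ?ys - 1. ?ys ! i \<noteq> ?ys ! Suc i"
    proof (intro allI impI)
      fix i assume "i < length ?ys - 1"
      then have "Suc i < length (a # ?ys) - 1" by simp
      then have "(a # ?ys) ! Suc i \<noteq> (a # ?ys) ! Suc (Suc i)" using "1.prems"(2) by blast
      then show "?ys ! i \<noteq> ?ys ! Suc i" by simp
    qed
    show "\<forall>i j. i < j \<and> j < length ?ys - 1 \<longrightarrow>
           closed_segment (?ys!i) (?ys!Suc i) \<inter> closed_segment (?ys!j) (?ys!Suc j)
             \<subseteq> (if j = Suc i then {?ys!j} else {})"
    proof (intro allI impI)
      fix i j assume "i < j \<and> j < length ?ys - 1"
      then have "Suc i < Suc j \<and> Suc j < length (a # ?ys) - 1" by simp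
      then have "closed_segment ((a # ?ys)!Suc i) ((a # ?ys)!Suc (Suc i)) \<inter> closed_segment ((a # ?ys)!Suc j) ((a # ?ys)!Suc (Suc j))
             \<subseteq> (if Suc j = Suc (Suc i) then {(a # ?ys)!Suc j} else {})"
        using "1.prems"(3) by blast
      then show "closed_segment (?ys!i) (?ys!Suc i) \<inter> closed_segment (?ys!j) (?ys!Suc j)
             \<subseteq> (if j = Suc i then {?ys!j} else {})" by (simp only: nth_Cons_Suc nat.inject)
    qed
  qed
  have ab: "a \<noteq> b" using "1.prems"(2) by force
  have img: "(\<Union>i<length (a # ?ys) - 1. closed_segment ((a # ?ys)!i) ((a # ?ys)!Suc i))
      = closed_segment a b \<union> (\<Union>i<length ?ys - 1. closed_segment (?ys!i) (?ys!Suc i))"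
  proof -
    have e: "{..<length (a # ?ys) - 1} = insert 0 (Suc ` {..<length ?ys - 1})"
      by (simp add: lessThan_Suc_eq_insert_0)
    show ?thesis unfolding e by simp
  qed
  have inter: "closed_segment a b \<inter> path_image (polyl ?ys) \<subseteq> {b}"
  proof
    fix x assume x: "x \<in> closed_segment a b \<inter> path_image (polyl ?ys)"
    then obtain j where j: "j < length ?ys - 1" "x \<in> closed_segment (?ys!j) (?ys!Suc j)"
      using IH by auto
    have "closed_segment ((a # ?ys)!0) ((a # ?ys)!Suc 0) \<inter> closed_segment ((a # ?ys)!Suc j) ((a # ?ys)!Suc (Suc j))
             \<subseteq> (if Suc j = Suc 0 then {(a # ?ys)!Suc j} else {})"
    proof -
      have "0 < Suc j \<and> Suc j < length (a # ?ys) - 1" using j(1) by simp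
      then show ?thesis using "1.prems"(3) by blast
    qed
    then show "x \<in> {b}" using x j by (auto split: if_splits)
  qed
  show ?case
    using IH ab inter img
    by (auto simp: arc_join arc_linepath path_image_join)
next
  case (2 a b)
  then show ?case by (force simp: arc_linepath)
qed auto

lemma pvert_lt: "i < length vs \<Longrightarrow> pvert vs i = vs ! i"
  by (simp add: pvert_def)

lemma pedge_lt: "Suc i < length vs \<Longrightarrow> pedge vs i = closed_segment (vs!i) (vs!Suc i)"
  by (simp add: pedge_def pvert_def)

lemma pedge_last: "length vs \<ge> 1 \<Longrightarrow> pedge vs (length vs - 1) = closed_segment (last vs) (hd vs)"
  by (cases vs) (auto simp: pedge_def pvert_def last_conv_nth)

lemma polygon_path:
  assumes sp: "simple_polygon vs"
  shows "\<exists>g. simple_path g \<and> pathfinish g = pathstart g \<and> path_image g = polygon_boundary vs"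
proof -
  let ?n = "length vs"
  have n3: "?n \<ge> 3" and dist: "distinct vs" using sp by (auto simp: simple_polygon_def)
  have E: "\<And>i j. i < ?n \<Longrightarrow> j < ?n \<Longrightarrow> i \<noteq> j \<Longrightarrow>
        (if j = Suc i mod ?n then pedge vs i \<inter> pedge vs j = {pvert vs j}
         else if i = Suc j mod ?n then pedge vs i \<inter> pedge vs j = {pvert vs i}
         else pedge vs i \<inter> pedge vs j = {})"
    using sp unfolding simple_polygon_def by blast
  have A: "arc (polyl vs) \<and> path_image (polyl vs) = (\<Union>i<?n - 1. closed_segment (vs!i) (vs!Suc i))
     \<and> pathstart (polyl vs) = hd vs \<and> pathfinish (polyl vs) = last vs"
  proof (rule polyl_props)
    show "2 \<le> ?n" using n3 by simp
    show "\<forall>i<?n - 1. vs ! i \<noteq> vs ! Suc i"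
      using dist by (simp add: nth_eq_iff_index_eq)
    show "\<forall>i j. i < j \<and> j < ?n - 1 \<longrightarrow>
           closed_segment (vs!i) (vs!Suc i) \<inter> closed_segment (vs!j) (vs!Suc j)
             \<subseteq> (if j = Suc i then {vs!j} else {})"
    proof (intro allI impI)
      fix i j assume ij: "i < j \<and> j < ?n - 1"
      have m1: "Suc i mod ?n = Suc i" "Suc j mod ?n = Suc j" using ij by auto
      have "i \<noteq> Suc j" using ij by simp
      have b: "Suc i < ?n" "Suc j < ?n" "j < ?n" "i < ?n" using ij by auto
      have Eij: "(if j = Suc i mod ?n then pedge vs i \<inter> pedge vs j = {pvert vs j}
         else if i = Suc j mod ?n then pedge vs i \<inter> pedge vs j = {pvert vs i}
         else pedge vs i \<inter> pedge vs j = {})" using E[of i j] b ij by simp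
      then show "closed_segment (vs!i) (vs!Suc i) \<inter> closed_segment (vs!j) (vs!Suc j)
             \<subseteq> (if j = Suc i then {vs!j} else {})"
        using ij m1 pedge_lt[OF b(1)] pedge_lt[OF b(2)] pvert_lt[OF b(3)] \<open>i \<noteq> Suc j\<close>
        by (simp split: if_splits)
    qed
  qed
  have sn: "Suc (?n - 1) = ?n" using n3 by simp
  have lh: "last vs \<noteq> hd vs"
    using dist n3 by (cases vs) (auto dest: last_in_set)
  let ?g = "polyl vs +++ linepath (last vs) (hd vs)"
  have ini: "path_image (polyl vs) \<inter> closed_segment (last vs) (hd vs) \<subseteq> {hd vs, last vs}"
  proof
    fix x assume x: "x \<in> path_image (polyl vs) \<inter> closed_segment (last vs) (hd vs)"
    then obtain i where i: "i < ?n - 1" "x \<in> closed_segment (vs!i) (vs!Suc i)" using A by auto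
    have pe: "x \<in> pedge vs i" "x \<in> pedge vs (?n - 1)"
      using i x pedge_lt[of i vs] pedge_last[of vs] n3 by auto
    have ne: "i \<noteq> ?n - 1" using i by simp
    show "x \<in> {hd vs, last vs}"
    proof (cases "i = 0")
      case True
      have c: "0 = Suc (?n - 1) mod ?n" unfolding sn by simp
      have pre: "?n - 1 < ?n" "0 < ?n" "?n - 1 \<noteq> 0" using n3 by auto
      have "pedge vs (?n - 1) \<inter> pedge vs 0 = {pvert vs 0}"
        using E[OF pre] unfolding if_P[OF c] .
      then show ?thesis using pe True n3 by (cases vs) (auto simp: pvert_def)
    next
      case False
      show ?thesis
      proof (cases "i = ?n - 2")
        case True
        have c: "?n - 1 = Suc i mod ?n" using n3 True by simp
        have pre: "i < ?n" "?n - 1 < ?n" "i \<noteq> ?n - 1" using n3 i by auto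
        have "pedge vs i \<inter> pedge vs (?n - 1) = {pvert vs (?n - 1)}"
          using E[OF pre] unfolding if_P[OF c] .
        moreover have "vs ! (?n - 1) = last vs" using n3 by (metis last_conv_nth list.size(3) not_numeral_le_zero)
        ultimately show ?thesis using pe n3 by (auto simp: pvert_def)
      next
        case F2: False
        have "?n - 1 \<noteq> Suc i mod ?n" using F2 i n3 by auto
        moreover have "i \<noteq> Suc (?n - 1) mod ?n" unfolding sn using False by simp
        moreover have pre: "i < ?n" "?n - 1 < ?n" "i \<noteq> ?n - 1" using n3 i by auto
        ultimately have "pedge vs i \<inter> pedge vs (?n - 1) = {}"
          using E[OF pre] by simp
        then show ?thesis using pe by auto
      qed
    qed
  qed
  have sg: "simple_path ?g"
    apply (rule simple_path_join_loop)
    using A lh ini by (auto simp: arc_linepath)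
  have cl: "pathfinish ?g = pathstart ?g" using A by simp
  have "polygon_boundary vs = (\<Union>i<?n - 1. pedge vs i) \<union> pedge vs (?n - 1)"
  proof -
    have "{..<?n} = insert (?n - 1) {..<?n - 1}" using n3 by auto
    then show ?thesis unfolding polygon_boundary_def by auto
  qed
  also have "... = path_image ?g"
    using A pedge_last[of vs] n3 pedge_lt[of _ vs] by (auto simp: path_image_join)
  finally show ?thesis using sg cl by metis
qed

lemma obst_facts:
  assumes "rectilinear_obstacle \<omega>"
  shows "compact \<omega> \<and> \<omega> \<subseteq> closure (interior \<omega>) \<and> interior \<omega> \<noteq> {}"
proof -
  obtain vs where vs: "simple_polygon vs" "\<omega> = polygon_region vs"
    using assms unfolding rectilinear_obstacle_def by blast
  obtain g where g: "simple_path g" "pathfinish g = pathstart g" "path_image g = polygon_boundary vs"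
    using polygon_path[OF vs(1)] by blast
  let ?B = "path_image g"
  have om: "\<omega> = ?B \<union> inside ?B" using vs(2) g(3) by (simp add: polygon_region_def)
  have J: "inside ?B \<noteq> {}" "?B \<subseteq> closure (inside ?B)" using jordan_pair[OF g(1,2)] by auto
  have pg: "path g" using g(1) simple_path_imp_path by blast
  have cl: "closed \<omega>" using closed_path_image_Un_inside[OF pg] om by simp
  have bB: "bounded ?B" using bounded_path_image[OF pg] .
  have bd: "bounded \<omega>" using om bB bounded_inside[OF bB] by simp
  have op: "open (inside ?B)" using open_inside[OF closed_path_image[OF pg]] .
  have sub: "inside ?B \<subseteq> interior \<omega>" using op om by (simp add: interior_maximal)
  have "\<omega> \<subseteq> closure (inside ?B)" using om J(2) closure_subset by blast
  also have "... \<subseteq> closure (interior \<omega>)" using sub closure_mono by blast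
  finally show ?thesis using cl bd J(1) sub compact_eq_bounded_closed by blast
qed

lemma bnds:
  assumes "compact W" "z \<in> W"
  shows "xmin W \<le> fst z \<and> fst z \<le> xmax W \<and> ymin W \<le> snd z \<and> snd z \<le> ymax W"
proof -
  have b: "bounded W" using assms(1) compact_imp_bounded by blast
  have bf: "bounded (fst ` W)" using bounded_fst[OF b] .
  have bs: "bounded (snd ` W)" using bounded_snd[OF b] .
  show ?thesis unfolding xmin_def xmax_def ymin_def ymax_def
    using assms(2) bf bs
    by (auto intro!: cInf_lower cSup_upper bounded_imp_bdd_below bounded_imp_bdd_above)
qed

lemma Lsh_aligned: "fst p = fst q \<or> snd p = snd q \<Longrightarrow> r \<in> {(fst q, snd p), (fst p, snd q)} \<Longrightarrow>
   closed_segment p q \<subseteq> Lsh p r q"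
proof -
  assume a: "fst p = fst q \<or> snd p = snd q" "r \<in> {(fst q, snd p), (fst p, snd q)}"
  then have "r = p \<or> r = q" by (auto simp: prod_eq_iff)
  then show ?thesis unfolding Lsh_def by blast
qed

lemma test_pair:
  assumes sk: "skeleton \<omega> S" and z: "z \<in> interior \<omega>"
    and p: "p \<notin> \<omega>" and q: "q \<notin> \<omega>" and al: "fst p = fst q \<or> snd p = snd q"
    and zin: "z \<in> closed_segment p q"
  shows "\<exists>s\<in>S. \<exists>w\<in>s. w \<in> closed_segment p q"
proof -
  have pi: "p \<notin> interior \<omega>" using p interior_subset by blast
  have qi: "q \<notin> interior \<omega>" using q interior_subset by blast
  have H: "\<forall>ps. short_L_path p q ps \<longrightarrow> path_set ps \<inter> interior \<omega> \<noteq> {}"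
  proof (intro allI impI)
    fix ps assume "short_L_path p q ps"
    then have "path_set ps = Lsh p (fst q, snd p) q \<or> path_set ps = Lsh p (fst p, snd q) q"
      by (rule shortL_shape)
    then have "closed_segment p q \<subseteq> path_set ps" using Lsh_aligned[OF al] by auto
    then show "path_set ps \<inter> interior \<omega> \<noteq> {}" using zin z by blast
  qed
  have K: "\<forall>ps. short_L_path p q ps \<longrightarrow> (\<exists>s\<in>S. path_set ps \<inter> s \<noteq> {})"
    using sk pi qi H unfolding skeleton_def by blast
  obtain ps where ps: "short_L_path p q ps" "path_set ps = Lsh p (fst q, snd p) q" using canon1 by blast
  obtain s where s: "s \<in> S" "path_set ps \<inter> s \<noteq> {}" using K ps(1) by blast
  have "Lsh p (fst q, snd p) q \<subseteq> closed_segment p q"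
  proof -
    have "(fst q, snd p) = p \<or> (fst q, snd p) = q" using al by (auto simp: prod_eq_iff)
    then show ?thesis unfolding Lsh_def by (auto simp: closed_segment_commute)
  qed
  then show ?thesis using s ps(2) by blast
qed

lemma corner_sets:
  fixes a b :: pt
  shows "{a, b} = {(min (fst a) (fst b), min (snd a) (snd b)), (max (fst a) (fst b), max (snd a) (snd b))} \<or>
         {a, b} = {(min (fst a) (fst b), max (snd a) (snd b)), (max (fst a) (fst b), min (snd a) (snd b))}"
proof (cases "fst a \<le> fst b")
  case True
  show ?thesis
  proof (cases "snd a \<le> snd b")
    case True2: True
    have "(min (fst a) (fst b), min (snd a) (snd b)) = a" "(max (fst a) (fst b), max (snd a) (snd b)) = b"
      using True True2 by (simp_all add: min_def max_def)
    then show ?thesis by simp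
  next
    case False
    have "(min (fst a) (fst b), max (snd a) (snd b)) = a" "(max (fst a) (fst b), min (snd a) (snd b)) = b"
      using True False by (simp_all add: min_def max_def)
    then show ?thesis by simp
  qed
next
  case False
  show ?thesis
  proof (cases "snd a \<le> snd b")
    case True2: True
    have "(min (fst a) (fst b), max (snd a) (snd b)) = b" "(max (fst a) (fst b), min (snd a) (snd b)) = a"
      using False True2 by (simp_all add: min_def max_def)
    then show ?thesis by (simp add: insert_commute)
  next
    case False2: False
    have "(min (fst a) (fst b), min (snd a) (snd b)) = b" "(max (fst a) (fst b), max (snd a) (snd b)) = a"
      using False False2 by (simp_all add: min_def max_def)
    then show ?thesis by (simp add: insert_commute)
  qed
qed

lemma unit_up: "(a::real) < b \<Longrightarrow> a \<le> x \<Longrightarrow> x \<le> b \<Longrightarrow>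
  0 \<le> (1 / (b - a)) * x + (- a / (b - a)) \<and> (1 / (b - a)) * x + (- a / (b - a)) \<le> 1"
proof -
  assume h: "a < b" "a \<le> x" "x \<le> b"
  have e: "(1 / (b - a)) * x + (- a / (b - a)) = (x - a) / (b - a)" by (simp add: diff_divide_distrib)
  show ?thesis unfolding e using h by (simp add: divide_simps)
qed

lemma unit_down: "(a::real) < b \<Longrightarrow> a \<le> x \<Longrightarrow> x \<le> b \<Longrightarrow>
  0 \<le> (- 1 / (b - a)) * x + (b / (b - a)) \<and> (- 1 / (b - a)) * x + (b / (b - a)) \<le> 1"
proof -
  assume h: "a < b" "a \<le> x" "x \<le> b"
  have e: "(- 1 / (b - a)) * x + (b / (b - a)) = (b - x) / (b - a)" by (simp add: diff_divide_distrib)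
  show ?thesis unfolding e using h by (simp add: divide_simps)
qed

lemma unit_vals: "(a::real) < b \<Longrightarrow> (1 / (b - a)) * a + (- a / (b - a)) = 0 \<and> (1 / (b - a)) * b + (- a / (b - a)) = 1
   \<and> (- 1 / (b - a)) * b + (b / (b - a)) = 0 \<and> (- 1 / (b - a)) * a + (b / (b - a)) = 1"
proof -
  assume h: "a < b"
  then have ne: "b - a \<noteq> 0" by simp
  have e1: "(1 / (b - a)) * b + (- a / (b - a)) = (b - a) / (b - a)"
  proof -
    have "(1 / (b - a)) * b + (- a / (b - a)) = b / (b - a) - a / (b - a)" by simp
    also have "... = (b - a) / (b - a)" by (rule diff_divide_distrib[symmetric])
    finally show ?thesis .
  qed
  have e2: "(- 1 / (b - a)) * a + (b / (b - a)) = (b - a) / (b - a)"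
  proof -
    have "(- 1 / (b - a)) * a + (b / (b - a)) = b / (b - a) - a / (b - a)" by simp
    also have "... = (b - a) / (b - a)" by (rule diff_divide_distrib[symmetric])
    finally show ?thesis .
  qed
  have d: "(b - a) / (b - a) = 1" by (rule divide_self[OF ne])
  have i1: "(1 / (b - a)) * a + (- a / (b - a)) = 0" by simp
  have i3: "(- 1 / (b - a)) * b + (b / (b - a)) = 0" by simp
  show ?thesis using i1 i3 trans[OF e1 d] trans[OF e2 d] by blast
qed

lemma key1:
  fixes \<omega> :: "pt set"
  assumes hv: "hvc \<omega>"
    and bd: "\<And>w. w \<in> \<omega> \<Longrightarrow> X0 \<le> fst w \<and> fst w \<le> X1 \<and> Y0 \<le> snd w \<and> snd w \<le> Y1"
    and xy: "X0 < X1" "Y0 < Y1"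
    and cd: "{c, d} = {(X0, Y0), (X1, Y1)} \<or> {c, d} = {(X0, Y1), (X1, Y0)}"
    and sd: "closed_segment c d \<subseteq> \<omega>"
    and p: "p \<notin> interior \<omega>" and q: "q \<notin> interior \<omega>"
    and n1: "Lsh p (fst q, snd p) q \<inter> interior \<omega> \<noteq> {}"
    and n2: "Lsh p (fst p, snd q) q \<inter> interior \<omega> \<noteq> {}"
    and r: "r \<in> {(fst q, snd p), (fst p, snd q)}"
  shows "Lsh p r q \<inter> closed_segment c d \<noteq> {}"
proof -
  let ?\<alpha> = "1 / (X1 - X0)" and ?\<beta> = "- X0 / (X1 - X0)"
  have a0: "?\<alpha> \<noteq> 0" using xy by simp
  have uv: "?\<alpha> * X0 + ?\<beta> = 0" "?\<alpha> * X1 + ?\<beta> = 1" using unit_vals[OF xy(1)] by auto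
  from cd show ?thesis
  proof
    assume c1: "{c, d} = {(X0, Y0), (X1, Y1)}"
    have seq: "closed_segment c d = closed_segment (X0, Y0) (X1, Y1)"
      using c1 by (auto simp: doubleton_eq_iff closed_segment_commute)
    let ?\<gamma> = "1 / (Y1 - Y0)" and ?\<delta> = "- Y0 / (Y1 - Y0)"
    have g0: "?\<gamma> \<noteq> 0" using xy by simp
    have uv2: "?\<gamma> * Y0 + ?\<delta> = 0" "?\<gamma> * Y1 + ?\<delta> = 1" using unit_vals[OF xy(2)] by auto
    have X: "Lsh p r q \<inter> closed_segment (X0, Y0) (X1, Y1) \<noteq> {}"
    proof (rule key0[OF a0 g0 hv _ _ _ _ p q n1 n2 r])
      show "\<And>w. w \<in> \<omega> \<Longrightarrow> 0 \<le> fst (aff ?\<alpha> ?\<beta> ?\<gamma> ?\<delta> w) \<and> fst (aff ?\<alpha> ?\<beta> ?\<gamma> ?\<delta> w) \<le> 1 \<and>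
                 0 \<le> snd (aff ?\<alpha> ?\<beta> ?\<gamma> ?\<delta> w) \<and> snd (aff ?\<alpha> ?\<beta> ?\<gamma> ?\<delta> w) \<le> 1"
        using bd unit_up[OF xy(1)] unit_up[OF xy(2)] by (simp add: aff_def)
      show "aff ?\<alpha> ?\<beta> ?\<gamma> ?\<delta> (X0, Y0) = (0, 0)" using uv uv2 by (simp add: aff_def)
      show "aff ?\<alpha> ?\<beta> ?\<gamma> ?\<delta> (X1, Y1) = (1, 1)" using uv uv2 by (simp add: aff_def)
      show "closed_segment (X0, Y0) (X1, Y1) \<subseteq> \<omega>" using sd unfolding seq .
    qed
    show ?thesis unfolding seq by (rule X)
  next
    assume c2: "{c, d} = {(X0, Y1), (X1, Y0)}"
    have seq: "closed_segment c d = closed_segment (X0, Y1) (X1, Y0)"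
      using c2 by (auto simp: doubleton_eq_iff closed_segment_commute)
    let ?\<gamma> = "- 1 / (Y1 - Y0)" and ?\<delta> = "Y1 / (Y1 - Y0)"
    have g0: "?\<gamma> \<noteq> 0" using xy by simp
    have uv2: "?\<gamma> * Y1 + ?\<delta> = 0" "?\<gamma> * Y0 + ?\<delta> = 1" using unit_vals[OF xy(2)] by auto
    have X: "Lsh p r q \<inter> closed_segment (X0, Y1) (X1, Y0) \<noteq> {}"
    proof (rule key0[OF a0 g0 hv _ _ _ _ p q n1 n2 r])
      show "\<And>w. w \<in> \<omega> \<Longrightarrow> 0 \<le> fst (aff ?\<alpha> ?\<beta> ?\<gamma> ?\<delta> w) \<and> fst (aff ?\<alpha> ?\<beta> ?\<gamma> ?\<delta> w) \<le> 1 \<and>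
                 0 \<le> snd (aff ?\<alpha> ?\<beta> ?\<gamma> ?\<delta> w) \<and> snd (aff ?\<alpha> ?\<beta> ?\<gamma> ?\<delta> w) \<le> 1"
        using bd unit_up[OF xy(1)] unit_down[OF xy(2)] by (simp add: aff_def)
      show "aff ?\<alpha> ?\<beta> ?\<gamma> ?\<delta> (X0, Y1) = (0, 0)" using uv uv2 by (simp add: aff_def)
      show "aff ?\<alpha> ?\<beta> ?\<gamma> ?\<delta> (X1, Y0) = (1, 1)" using uv uv2 by (simp add: aff_def)
      show "closed_segment (X0, Y1) (X1, Y0) \<subseteq> \<omega>" using sd unfolding seq .
    qed
    show ?thesis unfolding seq by (rule X)
  qed
qed

theorem lemma5:
  fixes \<omega> :: "(real \<times> real) set" and S :: "(real \<times> real) set set"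
  assumes "rect_convex_obstacle \<omega>"
    and "minimum_skeleton \<omega> S"
  shows "card S = 1 \<longleftrightarrow> has_diagonal \<omega>"
proof -
  have ro: "rectilinear_obstacle \<omega>" and rc: "rect_convex \<omega>"
    using assms(1) unfolding rect_convex_obstacle_def by blast+
  have sk: "skeleton \<omega> S" and mn: "\<And>S'. skeleton \<omega> S' \<Longrightarrow> card S \<le> card S'"
    using assms(2) unfolding minimum_skeleton_def by blast+
  have cpt: "compact \<omega>" and clo: "\<omega> \<subseteq> closure (interior \<omega>)" and ne: "interior \<omega> \<noteq> {}"
    using obst_facts[OF ro] by blast+
  have hv: "hvc \<omega>" using rc_hvc[OF rc] .
  define X0 where "X0 = xmin \<omega>"
  define X1 where "X1 = xmax \<omega>"
  define Y0 where "Y0 = ymin \<omega>"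
  define Y1 where "Y1 = ymax \<omega>"
  have bd: "\<And>z. z \<in> \<omega> \<Longrightarrow> X0 \<le> fst z \<and> fst z \<le> X1 \<and> Y0 \<le> snd z \<and> snd z \<le> Y1"
    using bnds[OF cpt] unfolding X0_def X1_def Y0_def Y1_def by blast
  have io: "interior \<omega> \<subseteq> \<omega>" by (rule interior_subset)
  have vhit: "\<exists>s\<in>S. \<exists>w\<in>s. fst w = fst z" if z: "z \<in> interior \<omega>" for z
  proof -
    let ?p = "(fst z, Y0 - 1)" and ?q = "(fst z, Y1 + 1)"
    have zo: "z \<in> \<omega>" using z io by blast
    have p: "?p \<notin> \<omega>" using bd by force
    have q: "?q \<notin> \<omega>" using bd by force
    have "bt2 ?p z ?q" using bd[OF zo] by (auto simp: bt2_def bt_def)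
    then have zin: "z \<in> closed_segment ?p ?q" by (intro seg_mem) auto
    obtain s w where sw: "s \<in> S" "w \<in> s" "w \<in> closed_segment ?p ?q"
      using test_pair[OF sk z p q _ zin] by auto
    have "bt2 ?p w ?q" using sw(3) by (rule seg_bt2)
    then have "fst w = fst z" by (auto simp: bt2_def bt_def)
    then show ?thesis using sw by blast
  qed
  have hhit: "\<exists>s\<in>S. \<exists>w\<in>s. snd w = snd z" if z: "z \<in> interior \<omega>" for z
  proof -
    let ?p = "(X0 - 1, snd z)" and ?q = "(X1 + 1, snd z)"
    have zo: "z \<in> \<omega>" using z io by blast
    have p: "?p \<notin> \<omega>" using bd by force
    have q: "?q \<notin> \<omega>" using bd by force
    have "bt2 ?p z ?q" using bd[OF zo] by (auto simp: bt2_def bt_def)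
    then have zin: "z \<in> closed_segment ?p ?q" by (intro seg_mem) auto
    obtain s w where sw: "s \<in> S" "w \<in> s" "w \<in> closed_segment ?p ?q"
      using test_pair[OF sk z p q _ zin] by auto
    have "bt2 ?p w ?q" using sw(3) by (rule seg_bt2)
    then have "snd w = snd z" by (auto simp: bt2_def bt_def)
    then show ?thesis using sw by blast
  qed
  obtain z0 where z0: "z0 \<in> interior \<omega>" using ne by blast
  have xy: "X0 < X1 \<and> Y0 < Y1"
  proof -
    obtain e where e: "e > 0" "ball z0 e \<subseteq> \<omega>" using z0 mem_interior by blast
    let ?h = "e / 2"
    have "dist z0 (z0 + (?h, 0)) < e" "dist z0 (z0 - (?h, 0)) < e" "dist z0 (z0 + (0, ?h)) < e" "dist z0 (z0 - (0, ?h)) < e"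
      using e by (simp_all add: dist_norm)
    then have w: "z0 + (?h, 0) \<in> \<omega>" "z0 - (?h, 0) \<in> \<omega>" "z0 + (0, ?h) \<in> \<omega>" "z0 - (0, ?h) \<in> \<omega>"
      using e by auto
    have "fst z0 + ?h \<le> X1" using bd[OF w(1)] by simp
    moreover have "X0 \<le> fst z0 - ?h" using bd[OF w(2)] by simp
    moreover have "snd z0 + ?h \<le> Y1" using bd[OF w(3)] by simp
    moreover have "Y0 \<le> snd z0 - ?h" using bd[OF w(4)] by simp
    ultimately show ?thesis using e(1) by linarith
  qed
  have finS: "finite S" using sk unfolding skeleton_def by blast
  show ?thesis
  proof
    assume c1: "card S = 1"
    then obtain s where S: "S = {s}" by (rule card_1_singletonE)
    have "is_segment s" "s \<subseteq> \<omega>" using sk S unfolding skeleton_def by auto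
    then obtain a b where ab: "a \<noteq> b" "s = closed_segment a b" and so: "s \<subseteq> \<omega>"
      unfolding is_segment_def by blast
    define K where "K = {v. bt (fst a) (fst v) (fst b) \<and> bt (snd a) (snd v) (snd b)}"
    have clK: "closed K"
      unfolding K_def bt_def
      by (intro closed_Collect_conj closed_Collect_le continuous_intros)
    have iK: "interior \<omega> \<subseteq> K"
    proof
      fix z assume z: "z \<in> interior \<omega>"
      obtain w1 where w1: "w1 \<in> s" "fst w1 = fst z" using vhit[OF z] S by blast
      obtain w2 where w2: "w2 \<in> s" "snd w2 = snd z" using hhit[OF z] S by blast
      have "bt2 a w1 b" "bt2 a w2 b" using w1(1) w2(1) ab(2) seg_bt2 by blast+
      then show "z \<in> K" using w1(2) w2(2) unfolding K_def bt2_def by simp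
    qed
    have oK: "\<omega> \<subseteq> K" using clo closure_minimal[OF iK clK] by blast
    have ao: "a \<in> \<omega>" "b \<in> \<omega>" using so ab(2) by auto
    have fK: "\<And>z. z \<in> \<omega> \<Longrightarrow> min (fst a) (fst b) \<le> fst z \<and> fst z \<le> max (fst a) (fst b) \<and>
                   min (snd a) (snd b) \<le> snd z \<and> snd z \<le> max (snd a) (snd b)"
      using oK unfolding K_def bt_def by blast
    have mx: "min (fst a) (fst b) \<in> fst ` \<omega>" "max (fst a) (fst b) \<in> fst ` \<omega>"
      "min (snd a) (snd b) \<in> snd ` \<omega>" "max (snd a) (snd b) \<in> snd ` \<omega>"
      using ao by (auto simp: min_def max_def)
    have eX0: "xmin \<omega> = min (fst a) (fst b)" unfolding xmin_def
      by (rule cInf_eq_minimum[OF mx(1)]) (use fK in auto)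
    have eX1: "xmax \<omega> = max (fst a) (fst b)" unfolding xmax_def
      by (rule cSup_eq_maximum[OF mx(2)]) (use fK in auto)
    have eY0: "ymin \<omega> = min (snd a) (snd b)" unfolding ymin_def
      by (rule cInf_eq_minimum[OF mx(3)]) (use fK in auto)
    have eY1: "ymax \<omega> = max (snd a) (snd b)" unfolding ymax_def
      by (rule cSup_eq_maximum[OF mx(4)]) (use fK in auto)
    have "opposite_extreme_corners \<omega> a b"
      unfolding opposite_extreme_corners_def eX0 eX1 eY0 eY1
      using ao corner_sets[of a b] by blast
    then show "has_diagonal \<omega>" unfolding has_diagonal_def using so ab(2) by blast
  next
    assume "has_diagonal \<omega>"
    then obtain c d where cd: "opposite_extreme_corners \<omega> c d" "closed_segment c d \<subseteq> \<omega>"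
      unfolding has_diagonal_def by blast
    have cd2: "{c, d} = {(X0, Y0), (X1, Y1)} \<or> {c, d} = {(X0, Y1), (X1, Y0)}"
      using cd(1) unfolding opposite_extreme_corners_def X0_def X1_def Y0_def Y1_def by blast
    have cne: "c \<noteq> d"
    proof
      assume "c = d"
      then show False using cd2 xy by (auto simp: doubleton_eq_iff)
    qed
    have Sne: "S \<noteq> {}" using vhit[OF z0] by blast
    have skd: "skeleton \<omega> {closed_segment c d}"
      unfolding skeleton_def
    proof (intro conjI allI impI)
      show "finite {closed_segment c d}" by simp
      show "\<forall>s\<in>{closed_segment c d}. is_segment s" using cne unfolding is_segment_def by blast
      show "\<Union> {closed_segment c d} \<subseteq> \<omega>" using cd(2) by simp
      fix p q ps
      assume H: "p \<notin> interior \<omega> \<and> q \<notin> interior \<omega> \<and>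
        (\<forall>ps. short_L_path p q ps \<longrightarrow> path_set ps \<inter> interior \<omega> \<noteq> {})"
        and ps: "short_L_path p q ps"
      obtain ps1 where ps1: "short_L_path p q ps1" "path_set ps1 = Lsh p (fst q, snd p) q" using canon1 by blast
      obtain ps2 where ps2: "short_L_path p q ps2" "path_set ps2 = Lsh p (fst p, snd q) q" using canon2 by blast
      have n1: "Lsh p (fst q, snd p) q \<inter> interior \<omega> \<noteq> {}" using H ps1 by metis
      have n2: "Lsh p (fst p, snd q) q \<inter> interior \<omega> \<noteq> {}" using H ps2 by metis
      obtain r where r: "r \<in> {(fst q, snd p), (fst p, snd q)}" "path_set ps = Lsh p r q"
        using shortL_shape[OF ps] by blast
      have "Lsh p r q \<inter> closed_segment c d \<noteq> {}"
        using key1[OF hv bd _ _ cd2 cd(2) _ _ n1 n2 r(1)] xy H by blast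
      then show "\<exists>s\<in>{closed_segment c d}. path_set ps \<inter> s \<noteq> {}" using r(2) by simp
    qed
    have "card S \<le> 1" using mn[OF skd] by simp
    moreover have "card S \<noteq> 0" using finS Sne by simp
    ultimately show "card S = 1" by linarith
  qed
qed

end
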